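(* Let $\gamma_a,\gamma_s>0$ and consider \[ \begin{cases} \gamma_a T_a'=-\lambda(T_a-T_s)+\varepsilon_a\sigma_B|T_s|^3T_s-2\varepsilon_a\sigma_B|T_a|^3T_a+q\beta_a(T_a),\\ \gamma_s T_s'=-\lambda(T_s-T_a)-\sigma_B|T_s|^3T_s+\varepsilon_a\sigma_B|T_a|^3T_a+q\beta_s(T_s),\\ T_a(0)=T_a^{(0)},\quad T_s(0)=T_s^{(0)}. \end{cases} \] (a) Assume $\lambda=0$, $q>0$, $\sigma_B>0$, $\beta_a=0$, $\beta_s$ is the piecewise linear coalbedo described in the context, $\varepsilon_a>2$, and $T_a^{(0)}\ge0$, $T_s^{(0)}\ge0$. Then the problem admits a unique maximal solution, and this solution blows up in finite time. (b) Assume $\lambda>0$, $q>0$, $\sigma_B>0$, $\beta_a\ge0$ and $\beta_s>0$ are globally Lipschitz continuous on $\mathbb R$, and $\varepsilon_a>2$. Then there exist initial conditions $T_a^{(0)}\ge0$, $T_s^{(0)}\ge0$ for which the solution of the problem blows up in finite time.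
   Context: The piecewise linear coalbedo is $\beta_s(T)=\beta_{s,-}$ for $T\le T_{s,-}$, $\beta_s(T)=\beta_{s,-}+(\beta_{s,+}-\beta_{s,-})\frac{T-T_{s,-}}{T_{s,+}-T_{s,-}}$ for $T\in[T_{s,-},T_{s,+}]$, and $\beta_s(T)=\beta_{s,+}$ for $T\ge T_{s,+}$, where $T_{s,+}>T_{s,-}>0$ and $\beta_{s,+}>\beta_{s,-}>0$. *)

theory Defs
  imports "HOL-Analysis.Analysis"
begin

definition coalbedo_pl :: "real \<Rightarrow> real \<Rightarrow> real \<Rightarrow> real \<Rightarrow> real \<Rightarrow> real" where
  "coalbedo_pl Tm Tp bm bp T =
     (if T \<le> Tm then bm
      else if T \<le> Tp then bm + (bp - bm) * (T - Tm) / (Tp - Tm)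
      else bp)"

definition rhs_a :: "real \<Rightarrow> real \<Rightarrow> real \<Rightarrow> real \<Rightarrow> (real \<Rightarrow> real) \<Rightarrow> real \<Rightarrow> real \<Rightarrow> real" where
  "rhs_a lam eps sig q ba Ta Ts =
     - lam * (Ta - Ts) + eps * sig * \<bar>Ts\<bar>^3 * Ts - 2 * eps * sig * \<bar>Ta\<bar>^3 * Ta + q * ba Ta"

definition rhs_s :: "real \<Rightarrow> real \<Rightarrow> real \<Rightarrow> real \<Rightarrow> (real \<Rightarrow> real) \<Rightarrow> real \<Rightarrow> real \<Rightarrow> real" where
  "rhs_s lam eps sig q bs Ta Ts =
     - lam * (Ts - Ta) - sig * \<bar>Ts\<bar>^3 * Ts + eps * sig * \<bar>Ta\<bar>^3 * Ta + q * bs Ts"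

definition is_solution ::
  "real \<Rightarrow> real \<Rightarrow> real \<Rightarrow> real \<Rightarrow> real \<Rightarrow> real \<Rightarrow> (real \<Rightarrow> real) \<Rightarrow> (real \<Rightarrow> real)
   \<Rightarrow> real \<Rightarrow> real \<Rightarrow> ereal \<Rightarrow> (real \<Rightarrow> real) \<Rightarrow> (real \<Rightarrow> real) \<Rightarrow> bool" where
  "is_solution ga gs lam eps sig q ba bs Ta0 Ts0 T Ta Ts \<longleftrightarrow>
     0 < T \<and> Ta 0 = Ta0 \<and> Ts 0 = Ts0 \<and>
     (\<forall>t. 0 \<le> t \<and> ereal t < T \<longrightarrow>
        (\<exists>Da Ds. (Ta has_real_derivative Da) (at t within {s. 0 \<le> s \<and> ereal s < T}) \<and>
                 (Ts has_real_derivative Ds) (at t within {s. 0 \<le> s \<and> ereal s < T}) \<and>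
                 ga * Da = rhs_a lam eps sig q ba (Ta t) (Ts t) \<and>
                 gs * Ds = rhs_s lam eps sig q bs (Ta t) (Ts t)))"

definition is_maximal_solution ::
  "real \<Rightarrow> real \<Rightarrow> real \<Rightarrow> real \<Rightarrow> real \<Rightarrow> real \<Rightarrow> (real \<Rightarrow> real) \<Rightarrow> (real \<Rightarrow> real)
   \<Rightarrow> real \<Rightarrow> real \<Rightarrow> ereal \<Rightarrow> (real \<Rightarrow> real) \<Rightarrow> (real \<Rightarrow> real) \<Rightarrow> bool" where
  "is_maximal_solution ga gs lam eps sig q ba bs Ta0 Ts0 T Ta Ts \<longleftrightarrow>
     is_solution ga gs lam eps sig q ba bs Ta0 Ts0 T Ta Ts \<and>
     (\<forall>T' Ta' Ts'. T \<le> T' \<longrightarrow> is_solution ga gs lam eps sig q ba bs Ta0 Ts0 T' Ta' Ts' \<longrightarrow>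
        (\<forall>t. 0 \<le> t \<and> ereal t < T \<longrightarrow> Ta' t = Ta t \<and> Ts' t = Ts t) \<longrightarrow> T' = T)"

definition blows_up :: "ereal \<Rightarrow> (real \<Rightarrow> real) \<Rightarrow> (real \<Rightarrow> real) \<Rightarrow> bool" where
  "blows_up T Ta Ts \<longleftrightarrow> T < \<infinity> \<and>
     filterlim (\<lambda>t. \<bar>Ta t\<bar> + \<bar>Ts t\<bar>) at_top (at_left (real_of_ereal T))"

definition unique_maximal_solution_blows_up ::
  "real \<Rightarrow> real \<Rightarrow> real \<Rightarrow> real \<Rightarrow> real \<Rightarrow> real \<Rightarrow> (real \<Rightarrow> real) \<Rightarrow> (real \<Rightarrow> real)
   \<Rightarrow> real \<Rightarrow> real \<Rightarrow> bool" where
  "unique_maximal_solution_blows_up ga gs lam eps sig q ba bs Ta0 Ts0 \<longleftrightarrow>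
     (\<exists>T Ta Ts. is_maximal_solution ga gs lam eps sig q ba bs Ta0 Ts0 T Ta Ts \<and>
        blows_up T Ta Ts \<and>
        (\<forall>T' Ta' Ts'. is_maximal_solution ga gs lam eps sig q ba bs Ta0 Ts0 T' Ta' Ts' \<longrightarrow>
           T' = T \<and> (\<forall>t. 0 \<le> t \<and> ereal t < T \<longrightarrow> Ta' t = Ta t \<and> Ts' t = Ts t)))"

end

theory Submission
  imports Defs
begin


lemma vd_fst: "(y has_vector_derivative y') F \<Longrightarrow> ((\<lambda>t. fst (y t)) has_real_derivative fst y') F"
  unfolding has_real_derivative_iff_has_vector_derivative
  by (rule bounded_linear.has_vector_derivative[OF bounded_linear_fst])

lemma vd_snd: "(y has_vector_derivative y') F \<Longrightarrow> ((\<lambda>t. snd (y t)) has_real_derivative snd y') F"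
  unfolding has_real_derivative_iff_has_vector_derivative
  by (rule bounded_linear.has_vector_derivative[OF bounded_linear_snd])

lemma mvt_int:
  fixes u u' :: "real \<Rightarrow> real"
  assumes "x < y" "\<And>z. z \<in> {x..y} \<Longrightarrow> (u has_real_derivative u' z) (at z within {x..y})"
  shows "\<exists>z. x < z \<and> z < y \<and> u y - u x = (y - x) * u' z"
proof -
  have c: "continuous_on {x..y} u" by (rule DERIV_continuous_on) (use assms in auto)
  have d: "(u has_real_derivative u' z) (at z)" if "x < z" "z < y" for z
    using assms(2)[of z] that by (simp add: at_within_Icc_at)
  obtain l z where z: "x < z" "z < y" "(u has_real_derivative l) (at z)" "u y - u x = (y - x) * l"
    using MVT[OF assms(1) c] d real_differentiable_def by meson
  have "l = u' z" using DERIV_unique[OF z(3) d[OF z(1,2)]] .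
  then show ?thesis using z by auto
qed

lemma mono_deriv:
  fixes u u' :: "real \<Rightarrow> real"
  assumes "x \<le> y" "\<And>z. z \<in> {x..y} \<Longrightarrow> (u has_real_derivative u' z) (at z within {x..y})"
    "\<And>z. z \<in> {x<..<y} \<Longrightarrow> 0 \<le> u' z"
  shows "u x \<le> u y"
proof (cases "x = y")
  case False
  then have "x < y" using assms by auto
  from mvt_int[OF this assms(2)] obtain z where "x < z" "z < y" "u y - u x = (y - x) * u' z" by blast
  moreover have "0 \<le> (y - x) * u' z" using assms(3)[of z] \<open>x < z\<close> \<open>z < y\<close> by simp
  ultimately show ?thesis by simp
qed simp

lemma gronwall0:
  fixes w w' :: "real \<Rightarrow> real"
  assumes T: "0 \<le> T" and d: "\<And>t. t\<in>{0..T} \<Longrightarrow> (w has_real_derivative w' t) (at t within {0..T})"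
    and le: "\<And>t. t\<in>{0..T} \<Longrightarrow> w' t \<le> C * w t" and nn: "\<And>t. t\<in>{0..T} \<Longrightarrow> 0 \<le> w t"
    and w0: "w 0 = 0"
  shows "w T = 0"
proof -
  define v where "v t = exp (- C * t) * w t" for t
  have dv: "(v has_real_derivative exp (- C * t) * (w' t - C * w t)) (at t within {0..T})" if "t \<in> {0..T}" for t
    unfolding v_def
    by (rule derivative_eq_intros refl d[OF that] | simp add: algebra_simps)+
  have "v T \<le> v 0"
  proof -
    have "- v 0 \<le> - v T"
    proof (rule mono_deriv[of 0 T "\<lambda>t. - v t" "\<lambda>t. - (exp (- C * t) * (w' t - C * w t))"])
      show "0 \<le> T" by fact
      fix z assume z: "z \<in> {0..T}"
      show "((\<lambda>t. - v t) has_real_derivative - (exp (- C * z) * (w' z - C * w z))) (at z within {0..T})"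
        using dv[OF z] by (rule DERIV_minus)
    next
      fix z assume z: "z \<in> {0<..<T}"
      then have "w' z - C * w z \<le> 0" using le[of z] by auto
      then show "0 \<le> - (exp (- C * z) * (w' z - C * w z))" by (simp add: mult_nonneg_nonpos)
    qed
    then show ?thesis by simp
  qed
  then have "exp (- C * T) * w T \<le> 0" by (simp add: v_def w0)
  then have "w T \<le> 0" by (simp add: mult_le_0_iff)
  then show ?thesis using nn[of T] T by auto
qed

lemma dmin: "((\<lambda>x. (min x 0)^2) has_real_derivative 2 * min x 0) (at x)"
proof (cases x "0::real" rule: linorder_cases)
  case less
  have "((\<lambda>x. x^2) has_real_derivative 2 * min x 0) (at x)" using less by (auto intro!: derivative_eq_intros)
  then show ?thesis
    by (rule has_field_derivative_transform_within_open[where S="{..<0}"]) (use less in \<open>auto simp: min_def\<close>)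
next
  case greater
  have "((\<lambda>x. 0) has_real_derivative 2 * min x 0) (at x)" using greater by simp
  then show ?thesis
    by (rule has_field_derivative_transform_within_open[where S="{0<..}"]) (use greater in \<open>auto simp: min_def\<close>)
next
  case equal
  have "((\<lambda>y. ((min y 0)^2 - (min 0 0)^2) / (y - 0)) \<longlongrightarrow> 0) (at (0::real))"
  proof (rule Lim_null_comparison[where g="\<lambda>y. \<bar>y\<bar>"])
    show "\<forall>\<^sub>F y in at 0. norm (((min y 0)^2 - (min 0 0)^2) / (y - 0)) \<le> \<bar>y\<bar>"
    proof (rule always_eventually, intro allI)
      fix y :: real
      have "\<bar>(min y 0)^2 / y\<bar> \<le> \<bar>y\<bar>"
      proof (cases "y = 0")
        case False
        have "(min y 0)^2 \<le> y^2" by (auto simp: min_def)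
        then have "(min y 0)^2 / \<bar>y\<bar> \<le> y^2 / \<bar>y\<bar>" by (intro divide_right_mono) auto
        also have "y^2 / \<bar>y\<bar> = \<bar>y\<bar>"
        proof -
          have "y^2 = \<bar>y\<bar> * \<bar>y\<bar>" by (simp add: power2_eq_square)
          then show ?thesis using False by (metis abs_eq_0 nonzero_mult_div_cancel_left)
        qed
        finally show ?thesis by (simp add: abs_divide)
      qed simp
      then show "norm (((min y 0)^2 - (min 0 0)^2) / (y - 0)) \<le> \<bar>y\<bar>" by simp
    qed
    show "((\<lambda>y. \<bar>y\<bar>) \<longlongrightarrow> 0) (at (0::real))"
      using tendsto_rabs[OF tendsto_ident_at[of "0::real" UNIV]] by simp
  qed
  then show ?thesis using equal by (simp add: DERIV_def)
qed


lemma picard: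
  fixes F :: "'a::banach \<Rightarrow> 'a" and y0 :: 'a
  assumes lip: "\<And>x y. x \<in> cball y0 1 \<Longrightarrow> y \<in> cball y0 1 \<Longrightarrow> norm (F x - F y) \<le> L * norm (x - y)"
   and bnd: "\<And>x. x \<in> cball y0 1 \<Longrightarrow> norm (F x) \<le> M"
   and h: "0 < h" "h * M \<le> 1" "h * L \<le> 1/2" "0 \<le> L"
  shows "\<exists>y. y 0 = y0 \<and> (\<forall>t\<in>{0..h}. (y has_vector_derivative F (y t)) (at t within {0..h}))"
proof -
  define cl where "cl t = max 0 (min h t)" for t :: real
  have cl_in: "cl t \<in> {0..h}" for t using h by (auto simp: cl_def)
  have cl_id: "t \<in> {0..h} \<Longrightarrow> cl t = t" for t by (auto simp: cl_def)
  have cl_cont: "continuous_on UNIV cl" unfolding cl_def by (intro continuous_intros)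
  define S :: "(real \<Rightarrow>\<^sub>C 'a) set" where "S = PiC UNIV (\<lambda>_. cball y0 1)"
  have M0: "0 \<le> M" using bnd[of y0] by (metis centre_in_cball norm_ge_zero order_trans zero_le_one)
  have contF: "continuous_on (cball y0 1) F"
    unfolding continuous_on_iff
  proof (intro ballI allI impI)
    fix x e assume x: "x \<in> cball y0 1" and e: "(0::real) < e"
    show "\<exists>d>0. \<forall>x'\<in>cball y0 1. dist x' x < d \<longrightarrow> dist (F x') (F x) < e"
    proof (intro exI[of _ "e/(L+1)"] conjI ballI impI)
      show "0 < e / (L + 1)" using e h by simp
      fix x' assume x': "x' \<in> cball y0 1" and d: "dist x' x < e / (L + 1)"
      have "dist (F x') (F x) \<le> L * dist x' x" using lip[OF x' x] by (simp add: dist_norm)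
      also have "\<dots> \<le> L * (e/(L+1))" using d h by (intro mult_left_mono) auto
      also have "\<dots> < e" using e h by (simp add: field_simps)
      finally show "dist (F x') (F x) < e" .
    qed
  qed
  have memS: "x \<in> S \<longleftrightarrow> (\<forall>t. apply_bcontfun x t \<in> cball y0 1)" for x
    by (simp add: S_def mem_PiC_iff Pi_iff)
  have contfx: "continuous_on A (\<lambda>s. F (apply_bcontfun x s))" if "x \<in> S" for x A
    by (rule continuous_on_compose2[OF contF continuous_on_apply_bcontfun]) (use that memS in auto)
  define g where "g x t = y0 + integral {0..cl t} (\<lambda>s. F (apply_bcontfun x s))" for x t
  have gbnd: "norm (g x t - y0) \<le> M * cl t" if "x \<in> S" for x t
  proof -
    have "norm (integral {0..cl t} (\<lambda>s. F (apply_bcontfun x s))) \<le> M * (cl t - 0)"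
      by (rule integral_bound) (use cl_in that memS bnd contfx in auto)
    then show ?thesis by (simp add: g_def)
  qed
  have gbnd1: "norm (g x t - y0) \<le> 1" if "x \<in> S" for x t
  proof -
    have "M * cl t \<le> M * h" using cl_in M0 by (intro mult_left_mono) auto
    then show ?thesis using gbnd[OF that, of t] h by (simp add: mult.commute)
  qed
  have gcont: "continuous_on UNIV (g x)" if "x \<in> S" for x
  proof -
    have "continuous_on {0..h} (\<lambda>u. integral {0..u} (\<lambda>s. F (apply_bcontfun x s)))"
      by (intro indefinite_integral_continuous_1 integrable_continuous_interval contfx that)
    then have "continuous_on UNIV (\<lambda>t. integral {0..cl t} (\<lambda>s. F (apply_bcontfun x s)))"
      by (rule continuous_on_compose2[OF _ cl_cont]) (use cl_in in auto)
    then show ?thesis unfolding g_def by (intro continuous_intros)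
  qed
  have gin: "g x \<in> bcontfun" if "x \<in> S" for x
  proof (rule bcontfun_normI[OF gcont[OF that]])
    fix t show "norm (g x t) \<le> norm y0 + 1"
      using gbnd1[OF that, of t] norm_triangle_ineq2[of "g x t" y0] by linarith
  qed
  define P where "P x = Bcontfun (g x)" for x
  have Pap: "apply_bcontfun (P x) = g x" if "x \<in> S" for x
    unfolding P_def using gin[OF that] by (simp add: Bcontfun_inverse)
  have PS: "P ` S \<subseteq> S"
  proof
    fix z assume "z \<in> P ` S" then obtain x where x: "x \<in> S" and z: "z = P x" by auto
    show "z \<in> S" unfolding memS z Pap[OF x]
      using gbnd1[OF x] by (simp add: dist_norm norm_minus_commute)
  qed
  have contr: "dist (P x) (P y) \<le> (1/2) * dist x y" if x: "x \<in> S" and y: "y \<in> S" for x y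
  proof (rule dist_bound)
    fix t
    have "dist (apply_bcontfun (P x) t) (apply_bcontfun (P y) t)
        = norm (integral {0..cl t} (\<lambda>s. F (apply_bcontfun x s) - F (apply_bcontfun y s)))"
      unfolding Pap[OF x] Pap[OF y] g_def dist_norm
      by (subst integral_diff) (auto intro!: integrable_continuous_interval contfx x y)
    also have "\<dots> \<le> (L * dist x y) * (cl t - 0)"
    proof (rule integral_bound)
      show "0 \<le> cl t" using cl_in by auto
      show "continuous_on {0..cl t} (\<lambda>s. F (apply_bcontfun x s) - F (apply_bcontfun y s))"
        by (intro continuous_intros contfx x y)
      fix s
      have "norm (F (apply_bcontfun x s) - F (apply_bcontfun y s)) \<le> L * norm (apply_bcontfun x s - apply_bcontfun y s)"
        using x y memS by (intro lip) auto
      also have "\<dots> \<le> L * dist x y"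
        using dist_bounded[of x s y] h by (intro mult_left_mono) (auto simp: dist_norm)
      finally show "norm (F (apply_bcontfun x s) - F (apply_bcontfun y s)) \<le> L * dist x y" .
    qed
    also have "\<dots> \<le> (L * dist x y) * h"
      using cl_in h by (intro mult_left_mono) auto
    also have "\<dots> = (h * L) * dist x y" by simp
    also have "\<dots> \<le> (1/2) * dist x y" using h by (intro mult_right_mono) auto
    finally show "dist (apply_bcontfun (P x) t) (apply_bcontfun (P y) t) \<le> 1 / 2 * dist x y" .
  qed
  have Sne: "S \<noteq> {}"
  proof -
    have "const_bcontfun y0 \<in> S" unfolding memS by (simp add: const_bcontfun.rep_eq)
    then show ?thesis by auto
  qed
  have Scl: "complete S" unfolding complete_eq_closed S_def by (rule closed_PiC) auto
  obtain x where x: "x \<in> S" "P x = x"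
    using Banach_fix[OF Scl Sne _ _ PS contr] by auto
  define y where "y = apply_bcontfun x"
  have yg: "y t = g x t" for t using Pap[OF x(1)] x(2) by (simp add: y_def)
  show ?thesis
  proof (intro exI[of _ y] conjI ballI)
    show "y 0 = y0" by (simp add: yg g_def cl_def)
    fix t assume t: "t \<in> {0..h}"
    have "((\<lambda>u. y0 + integral {0..u} (\<lambda>s. F (y s))) has_vector_derivative (0 + F (y t))) (at t within {0..h})"
      by (intro derivative_intros integral_has_vector_derivative t) (use contfx[OF x(1)] y_def in auto)
    then have "((\<lambda>u. y0 + integral {0..u} (\<lambda>s. F (y s))) has_vector_derivative F (y t)) (at t within {0..h})"
      by simp
    then show "(y has_vector_derivative F (y t)) (at t within {0..h})"
      proof (rule has_vector_derivative_transform[OF t, rotated])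
      fix u assume u: "u \<in> {0..h}"
      show "y u = y0 + integral {0..u} (\<lambda>s. F (y s))"
        using yg[of u] unfolding g_def cl_id[OF u] y_def .
    qed
  qed
qed


lemma quart_pos:
  fixes a b R :: real
  assumes "0 \<le> a" "0 \<le> b" "a \<le> R" "b \<le> R"
  shows "\<bar>a^4 - b^4\<bar> \<le> 4 * R^3 * \<bar>a-b\<bar>"
proof -
  have e: "a^4 - b^4 = (a-b) * (a^3+a^2 * b+a * b^2+b^3)" by (simp add: algebra_simps power2_eq_square power3_eq_cube power4_eq_xxxx)
  have R: "0 \<le> R" using assms by auto
  have 1: "a^3 \<le> R^3" using assms by (intro power_mono) auto
  have 2: "a^2 * b \<le> R^2 * R" using assms by (intro mult_mono power_mono) auto
  have 3: "a * b^2 \<le> R * R^2" using assms by (intro mult_mono power_mono) auto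
  have 4: "b^3 \<le> R^3" using assms by (intro power_mono) auto
  have S0: "0 \<le> a^3+a^2 * b+a * b^2+b^3" using assms by simp
  have S: "a^3+a^2 * b+a * b^2+b^3 \<le> 4 * R^3" using 1 2 3 4 by (simp add: power2_eq_square power3_eq_cube)
  have "\<bar>a^4 - b^4\<bar> = \<bar>a-b\<bar> * (a^3+a^2 * b+a * b^2+b^3)" unfolding e abs_mult using S0 by simp
  also have "\<dots> \<le> \<bar>a-b\<bar> * (4 * R^3)" using S by (intro mult_left_mono) auto
  finally show ?thesis by (simp add: mult.commute)
qed

lemma quart_opp:
  fixes a b R :: real
  assumes "0 \<le> a" "0 \<le> b" "a \<le> R" "b \<le> R"
  shows "a^4 + b^4 \<le> 4 * R^3 * (a+b)"
proof -
  have "a^4 = a^3 * a" by (simp add: power_numeral_reduce)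
  also have "\<dots> \<le> R^3 * a" using assms by (intro mult_right_mono power_mono) auto
  finally have 1: "a^4 \<le> R^3 * a" .
  have "b^4 = b^3 * b" by (simp add: power_numeral_reduce)
  also have "\<dots> \<le> R^3 * b" using assms by (intro mult_right_mono power_mono) auto
  finally have 2: "b^4 \<le> R^3 * b" .
  have "0 \<le> R^3 * (a+b)" using assms by simp
  then show ?thesis using 1 2 by (simp add: algebra_simps)
qed

lemma quart_lip:
  fixes a b R :: real
  assumes "\<bar>a\<bar> \<le> R" "\<bar>b\<bar> \<le> R"
  shows "abs (\<bar>a\<bar>^3 * a - \<bar>b\<bar>^3 * b) \<le> 4 * R^3 * \<bar>a-b\<bar>"
proof -
  have pa: "0 \<le> a \<Longrightarrow> abs a^3 * a = a^4" by (simp add: power_numeral_reduce)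
  have na: "a < 0 \<Longrightarrow> abs a^3 * a = -(a^4)" by (simp add: power_numeral_reduce)
  have pb: "0 \<le> b \<Longrightarrow> abs b^3 * b = b^4" by (simp add: power_numeral_reduce)
  have nb: "b < 0 \<Longrightarrow> abs b^3 * b = -(b^4)" by (simp add: power_numeral_reduce)
  consider "0 \<le> a" "0 \<le> b" | "0 \<le> a" "b < 0" | "a < 0" "0 \<le> b" | "a < 0" "b < 0" by linarith
  then show ?thesis
  proof cases
    case 1 then show ?thesis using pa pb quart_pos[of a b R] assms by auto
  next
    case 2
    have "a^4 + (-b)^4 \<le> 4 * R^3 * (a+(-b))" using 2 assms by (intro quart_opp) auto
    then show ?thesis using 2 pa nb by simp
  next
    case 3
    have "(-a)^4 + b^4 \<le> 4 * R^3 * ((-a)+b)" using 3 assms by (intro quart_opp) auto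
    then show ?thesis using 3 na pb by (simp add: abs_minus_commute)
  next
    case 4
    have "\<bar>(-a)^4 - (-b)^4\<bar> \<le> 4 * R^3 * \<bar>(-a)-(-b)\<bar>" using 4 assms by (intro quart_pos) auto
    then show ?thesis using 4 na nb by (simp add: abs_minus_commute)
  qed
qed


lemma tri5: "\<bar>(p1::real) + p2 + p3 - p4 + p5\<bar> \<le> \<bar>p1\<bar> + \<bar>p2\<bar> + \<bar>p3\<bar> + \<bar>p4\<bar> + \<bar>p5\<bar>"
  by linarith

lemma tri5b: "\<bar>(p1::real) + p2 - p3 + p4 + p5\<bar> \<le> \<bar>p1\<bar> + \<bar>p2\<bar> + \<bar>p3\<bar> + \<bar>p4\<bar> + \<bar>p5\<bar>"
  by linarith

locale sys =
  fixes ga gs lam eps sig q :: real and ba bs :: "real \<Rightarrow> real" and La Ls :: real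
  assumes ga: "0 < ga" and gs: "0 < gs" and lam: "0 \<le> lam" and q: "0 \<le> q" and sig: "0 < sig"
    and eps: "2 < eps"
    and ba_nn: "\<And>x. 0 \<le> ba x" and bs_nn: "\<And>x. 0 \<le> bs x"
    and ba_lip: "La-lipschitz_on UNIV ba" and bs_lip: "Ls-lipschitz_on UNIV bs"
begin

abbreviation "fa \<equiv> rhs_a lam eps sig q ba"
abbreviation "fs \<equiv> rhs_s lam eps sig q bs"
abbreviation "sol \<equiv> is_solution ga gs lam eps sig q ba bs"

definition "KK R = lam + 8 * eps * sig * R^3 + 4 * sig * R^3 + q * (La+Ls)"

lemma La: "0 \<le> La" and Ls: "0 \<le> Ls"
  using ba_lip bs_lip by (auto simp: lipschitz_on_def)

lemma ba_L: "\<bar>ba x - ba y\<bar> \<le> La * \<bar>x - y\<bar>"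
  using lipschitz_onD[OF ba_lip, of x y] by (simp add: dist_real_def)

lemma bs_L: "\<bar>bs x - bs y\<bar> \<le> Ls * \<bar>x - y\<bar>"
  using lipschitz_onD[OF bs_lip, of x y] by (simp add: dist_real_def)

lemma KK_nn: "0 \<le> R \<Longrightarrow> 0 \<le> KK R"
  unfolding KK_def using lam eps sig q La Ls by simp

lemma fa_lip:
  assumes "\<bar>a1\<bar> \<le> R" "\<bar>s1\<bar> \<le> R" "\<bar>a2\<bar> \<le> R" "\<bar>s2\<bar> \<le> R"
  shows "\<bar>fa a1 s1 - fa a2 s2\<bar> \<le> KK R * (\<bar>a1 - a2\<bar> + \<bar>s1 - s2\<bar>)"
proof -
  define A where "A = \<bar>a1 - a2\<bar>"
  define B where "B = \<bar>s1 - s2\<bar>"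
  have R: "0 \<le> R" using assms by auto
  have X: "abs (\<bar>s1\<bar>^3 * s1 - \<bar>s2\<bar>^3 * s2) \<le> 4 * R^3 * B" unfolding B_def by (rule quart_lip) fact+
  have Y: "abs (\<bar>a1\<bar>^3 * a1 - \<bar>a2\<bar>^3 * a2) \<le> 4 * R^3 * A" unfolding A_def by (rule quart_lip) fact+
  have Z: "\<bar>ba a1 - ba a2\<bar> \<le> La * A" unfolding A_def by (rule ba_L)
  have e: "fa a1 s1 - fa a2 s2 = - lam * (a1 - a2) + lam * (s1 - s2)
      + (eps * sig) * (\<bar>s1\<bar>^3 * s1 - \<bar>s2\<bar>^3 * s2) - (2 * eps * sig) * (\<bar>a1\<bar>^3 * a1 - \<bar>a2\<bar>^3 * a2)
      + q * (ba a1 - ba a2)"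
    unfolding rhs_a_def by (simp add: algebra_simps)
  have es: "0 \<le> eps * sig" using eps sig by simp
  have "\<bar>fa a1 s1 - fa a2 s2\<bar> \<le> lam * A + lam * B + (eps * sig) * abs (\<bar>s1\<bar>^3 * s1 - \<bar>s2\<bar>^3 * s2)
      + (2 * eps * sig) * abs (\<bar>a1\<bar>^3 * a1 - \<bar>a2\<bar>^3 * a2) + q * \<bar>ba a1 - ba a2\<bar>"
    unfolding e A_def B_def using lam q es eps sig
    by (intro order.trans[OF tri5]) (simp add: abs_mult)
  also have "\<dots> \<le> lam * A + lam * B + (eps * sig) * (4 * R^3 * B) + (2 * eps * sig) * (4 * R^3 * A) + q * (La * A)"
    using X Y Z es q by (intro add_mono mult_left_mono order.refl) auto
  also have "\<dots> \<le> KK R * (A + B)"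
  proof -
    have "0 \<le> eps * sig * R^3 * B" "0 \<le> eps * sig * R^3 * A" "0 \<le> sig * R^3 * A" "0 \<le> sig * R^3 * B" "0 \<le> q * Ls * A"
      "0 \<le> q * La * B" "0 \<le> q * Ls * B" "0 \<le> lam * A" "0 \<le> lam * B"
      using es sig R q La Ls lam by (auto simp: A_def B_def)
    then show ?thesis unfolding KK_def by (simp add: algebra_simps)
  qed
  finally show ?thesis by (simp add: A_def B_def)
qed

lemma fs_lip:
  assumes "\<bar>a1\<bar> \<le> R" "\<bar>s1\<bar> \<le> R" "\<bar>a2\<bar> \<le> R" "\<bar>s2\<bar> \<le> R"
  shows "\<bar>fs a1 s1 - fs a2 s2\<bar> \<le> KK R * (\<bar>a1 - a2\<bar> + \<bar>s1 - s2\<bar>)"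
proof -
  define A where "A = \<bar>a1 - a2\<bar>"
  define B where "B = \<bar>s1 - s2\<bar>"
  have R: "0 \<le> R" using assms by auto
  have X: "abs (\<bar>s1\<bar>^3 * s1 - \<bar>s2\<bar>^3 * s2) \<le> 4 * R^3 * B" unfolding B_def by (rule quart_lip) fact+
  have Y: "abs (\<bar>a1\<bar>^3 * a1 - \<bar>a2\<bar>^3 * a2) \<le> 4 * R^3 * A" unfolding A_def by (rule quart_lip) fact+
  have Z: "\<bar>bs s1 - bs s2\<bar> \<le> Ls * B" unfolding B_def by (rule bs_L)
  have e: "fs a1 s1 - fs a2 s2 = - lam * (s1 - s2) + lam * (a1 - a2)
      - sig * (\<bar>s1\<bar>^3 * s1 - \<bar>s2\<bar>^3 * s2) + (eps * sig) * (\<bar>a1\<bar>^3 * a1 - \<bar>a2\<bar>^3 * a2)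
      + q * (bs s1 - bs s2)"
    unfolding rhs_s_def by (simp add: algebra_simps)
  have es: "0 \<le> eps * sig" using eps sig by simp
  have "\<bar>fs a1 s1 - fs a2 s2\<bar> \<le> lam * B + lam * A + sig * abs (\<bar>s1\<bar>^3 * s1 - \<bar>s2\<bar>^3 * s2)
      + (eps * sig) * abs (\<bar>a1\<bar>^3 * a1 - \<bar>a2\<bar>^3 * a2) + q * \<bar>bs s1 - bs s2\<bar>"
    unfolding e A_def B_def using lam q es sig eps
    by (intro order.trans[OF tri5b]) (simp add: abs_mult)
  also have "\<dots> \<le> lam * B + lam * A + sig * (4 * R^3 * B) + (eps * sig) * (4 * R^3 * A) + q * (Ls * B)"
    using X Y Z es q sig by (intro add_mono mult_left_mono order.refl) auto
  also have "\<dots> \<le> KK R * (A + B)"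
  proof -
    have "0 \<le> eps * sig * R^3 * B" "0 \<le> eps * sig * R^3 * A" "0 \<le> sig * R^3 * A" "0 \<le> sig * R^3 * B" "0 \<le> q * Ls * A"
      "0 \<le> q * La * B" "0 \<le> q * La * A" "0 \<le> lam * A" "0 \<le> lam * B"
      using es sig R q La Ls lam by (auto simp: A_def B_def)
    then show ?thesis unfolding KK_def by (simp add: algebra_simps)
  qed
  finally show ?thesis by (simp add: A_def B_def)
qed


lemma local_ex:
  assumes R: "0 \<le> R"
  shows "\<exists>h>0. \<forall>a0 s0. \<bar>a0\<bar> \<le> R \<longrightarrow> \<bar>s0\<bar> \<le> R \<longrightarrow> (\<exists>Ta Ts. Ta 0 = a0 \<and> Ts 0 = s0 \<and>
     (\<forall>t\<in>{0..h}. (Ta has_real_derivative fa (Ta t) (Ts t) / ga) (at t within {0..h}) \<and>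
                  (Ts has_real_derivative fs (Ta t) (Ts t) / gs) (at t within {0..h})))"
proof -
  define R1 where "R1 = R + 1"
  define K where "K = KK R1"
  define F where "F x = (fa (fst x) (snd x) / ga, fs (fst x) (snd x) / gs)" for x :: "real \<times> real"
  define L where "L = 2 * (K / ga + K / gs)"
  define M where "M = (\<bar>fa 0 0\<bar> + 2 * K * R1) / ga + (\<bar>fs 0 0\<bar> + 2 * K * R1) / gs"
  define h where "h = 1 / (2 * (L + M + 1))"
  have R1: "0 \<le> R1" using R by (simp add: R1_def)
  have K0: "0 \<le> K" unfolding K_def using KK_nn[OF R1] .
  have L0: "0 \<le> L" unfolding L_def using K0 ga gs by simp
  have M0: "0 \<le> M" unfolding M_def using K0 ga gs R1 by simp
  have h0: "0 < h" unfolding h_def using L0 M0 by simp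
  have hM: "h * M \<le> 1" unfolding h_def using L0 M0 by (simp add: field_simps)
  have hL: "h * L \<le> 1/2" unfolding h_def using L0 M0 by (simp add: field_simps)
  have main: "\<exists>Ta Ts. Ta 0 = a0 \<and> Ts 0 = s0 \<and>
     (\<forall>t\<in>{0..h}. (Ta has_real_derivative fa (Ta t) (Ts t) / ga) (at t within {0..h}) \<and>
                  (Ts has_real_derivative fs (Ta t) (Ts t) / gs) (at t within {0..h}))"
    if a0: "\<bar>a0\<bar> \<le> R" and s0: "\<bar>s0\<bar> \<le> R" for a0 s0
  proof -
    have inb: "\<bar>fst x\<bar> \<le> R1 \<and> \<bar>snd x\<bar> \<le> R1" if "x \<in> cball (a0, s0) 1" for x
    proof -
      have "dist a0 (fst x) \<le> 1" "dist s0 (snd x) \<le> 1"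
        using that dist_fst_le[of "(a0,s0)" x] dist_snd_le[of "(a0,s0)" x] by auto
      then show ?thesis using a0 s0 by (auto simp: R1_def dist_real_def)
    qed
    have cmp: "\<bar>fst x - fst y\<bar> + \<bar>snd x - snd y\<bar> \<le> 2 * norm (x - y)" for x y :: "real \<times> real"
    proof -
      have "\<bar>fst x - fst y\<bar> \<le> norm (x - y)" "\<bar>snd x - snd y\<bar> \<le> norm (x - y)"
        using dist_fst_le[of x y] dist_snd_le[of x y] by (auto simp: dist_norm)
      then show ?thesis by simp
    qed
    have lip: "norm (F x - F y) \<le> L * norm (x - y)" if x: "x \<in> cball (a0,s0) 1" and y: "y \<in> cball (a0,s0) 1" for x y
    proof -
      have fa': "\<bar>fa (fst x) (snd x) - fa (fst y) (snd y)\<bar> \<le> K * (\<bar>fst x - fst y\<bar> + \<bar>snd x - snd y\<bar>)"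
        unfolding K_def using inb[OF x] inb[OF y] by (intro fa_lip) auto
      have fs': "\<bar>fs (fst x) (snd x) - fs (fst y) (snd y)\<bar> \<le> K * (\<bar>fst x - fst y\<bar> + \<bar>snd x - snd y\<bar>)"
        unfolding K_def using inb[OF x] inb[OF y] by (intro fs_lip) auto
      have "norm (F x - F y) \<le> \<bar>fa (fst x) (snd x) / ga - fa (fst y) (snd y) / ga\<bar> + \<bar>fs (fst x) (snd x) / gs - fs (fst y) (snd y) / gs\<bar>"
        unfolding F_def using norm_Pair_le by (simp del: real_norm_def add: real_norm_def[symmetric])
      also have "\<dots> = \<bar>fa (fst x) (snd x) - fa (fst y) (snd y)\<bar> / ga + \<bar>fs (fst x) (snd x) - fs (fst y) (snd y)\<bar> / gs"
        using ga gs by (simp add: diff_divide_distrib[symmetric] abs_divide)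
      also have "\<dots> \<le> K * (\<bar>fst x - fst y\<bar> + \<bar>snd x - snd y\<bar>) / ga + K * (\<bar>fst x - fst y\<bar> + \<bar>snd x - snd y\<bar>) / gs"
        using fa' fs' ga gs by (intro add_mono divide_right_mono) auto
      also have "\<dots> = (K / ga + K / gs) * (\<bar>fst x - fst y\<bar> + \<bar>snd x - snd y\<bar>)" by (simp add: add_divide_distrib algebra_simps)
      also have "\<dots> \<le> (K / ga + K / gs) * (2 * norm (x - y))"
        using cmp[of x y] K0 ga gs by (intro mult_left_mono) auto
      also have "\<dots> = L * norm (x - y)" by (simp add: L_def algebra_simps)
      finally show ?thesis .
    qed
    have bnd: "norm (F x) \<le> M" if x: "x \<in> cball (a0,s0) 1" for x
    proof -
      have fa': "\<bar>fa (fst x) (snd x) - fa 0 0\<bar> \<le> K * (\<bar>fst x - 0\<bar> + \<bar>snd x - 0\<bar>)"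
        unfolding K_def using inb[OF x] R1 by (intro fa_lip) auto
      have fs': "\<bar>fs (fst x) (snd x) - fs 0 0\<bar> \<le> K * (\<bar>fst x - 0\<bar> + \<bar>snd x - 0\<bar>)"
        unfolding K_def using inb[OF x] R1 by (intro fs_lip) auto
      have s2: "K * (\<bar>fst x - 0\<bar> + \<bar>snd x - 0\<bar>) \<le> 2 * K * R1"
        using inb[OF x] K0 mult_left_mono[of "\<bar>fst x\<bar> + \<bar>snd x\<bar>" "2 * R1" K] by auto
      have A: "\<bar>fa (fst x) (snd x)\<bar> \<le> \<bar>fa 0 0\<bar> + 2 * K * R1" using fa' s2 by linarith
      have B: "\<bar>fs (fst x) (snd x)\<bar> \<le> \<bar>fs 0 0\<bar> + 2 * K * R1" using fs' s2 by linarith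
      have "norm (F x) \<le> \<bar>fa (fst x) (snd x) / ga\<bar> + \<bar>fs (fst x) (snd x) / gs\<bar>"
        unfolding F_def using norm_Pair_le by (simp del: real_norm_def add: real_norm_def[symmetric])
      also have "\<dots> = \<bar>fa (fst x) (snd x)\<bar> / ga + \<bar>fs (fst x) (snd x)\<bar> / gs"
        using ga gs by (simp add: abs_divide)
      also have "\<dots> \<le> M" unfolding M_def
        using A B ga gs by (intro add_mono divide_right_mono) auto
      finally show ?thesis .
    qed
    obtain y where y0: "y 0 = (a0, s0)"
      and yd: "\<And>t. t\<in>{0..h} \<Longrightarrow> (y has_vector_derivative F (y t)) (at t within {0..h})"
      using picard[of "(a0,s0)" F L M h, OF lip bnd h0 hM hL L0] by blast
    have "\<forall>t\<in>{0..h}. ((\<lambda>t. fst (y t)) has_real_derivative fa (fst (y t)) (snd (y t)) / ga) (at t within {0..h}) \<and>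
        ((\<lambda>t. snd (y t)) has_real_derivative fs (fst (y t)) (snd (y t)) / gs) (at t within {0..h})"
      using vd_fst[OF yd] vd_snd[OF yd] by (simp add: F_def)
    then show ?thesis using y0 by (intro exI[of _ "\<lambda>t. fst (y t)"] exI[of _ "\<lambda>t. snd (y t)"]) auto
  qed
  show ?thesis using h0 main by blast
qed

end


abbreviation D :: "ereal \<Rightarrow> real set" where "D T \<equiv> {s. 0 \<le> s \<and> ereal s < T}"

lemma gron_aux:
  fixes x y p r K ga gs :: real
  assumes p: "\<bar>p\<bar> \<le> K * (\<bar>x\<bar> + \<bar>y\<bar>)" and r: "\<bar>r\<bar> \<le> K * (\<bar>x\<bar> + \<bar>y\<bar>)" and g: "0 < ga" "0 < gs" and K: "0 \<le> K"
  shows "2 * x * (p / ga) + 2 * y * (r / gs) \<le> 4 * K * (1 / ga + 1 / gs) * (x^2 + y^2)"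
proof -
  define X where "X = \<bar>x\<bar> + \<bar>y\<bar>"
  have X2: "X^2 \<le> 2 * (x^2 + y^2)"
  proof -
    have "0 \<le> (\<bar>x\<bar> - \<bar>y\<bar>)^2" by simp
    then show ?thesis unfolding X_def by (simp add: power2_eq_square algebra_simps)
  qed
  have 1: "x * p \<le> K * X^2"
  proof -
    have "x * p \<le> \<bar>x\<bar> * \<bar>p\<bar>" by (simp add: abs_mult[symmetric])
    also have "\<dots> \<le> X * (K * X)" using p by (intro mult_mono) (auto simp: X_def)
    finally show ?thesis by (simp add: power2_eq_square algebra_simps)
  qed
  have 2: "y * r \<le> K * X^2"
  proof -
    have "y * r \<le> \<bar>y\<bar> * \<bar>r\<bar>" by (simp add: abs_mult[symmetric])
    also have "\<dots> \<le> X * (K * X)" using r by (intro mult_mono) (auto simp: X_def)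
    finally show ?thesis by (simp add: power2_eq_square algebra_simps)
  qed
  have "2 * x * (p / ga) + 2 * y * (r / gs) = 2 * (x * p) / ga + 2 * (y * r) / gs" by simp
  also have "\<dots> \<le> 2 * (K * X^2) / ga + 2 * (K * X^2) / gs"
    using 1 2 g by (intro add_mono divide_right_mono) auto
  also have "\<dots> = 2 * K * (1 / ga + 1 / gs) * X^2" by (simp add: field_simps)
  also have "\<dots> \<le> 2 * K * (1 / ga + 1 / gs) * (2 * (x^2 + y^2))"
    using X2 K g by (intro mult_left_mono) auto
  also have "\<dots> = 4 * K * (1 / ga + 1 / gs) * (x^2 + y^2)" by (simp add: algebra_simps)
  finally show ?thesis .
qed

context sys begin

lemma sol_D:
  assumes s: "sol a0 s0 T Ta Ts" and t: "0 \<le> t" "ereal t < T"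
  shows "(Ta has_real_derivative fa (Ta t) (Ts t) / ga) (at t within D T)"
    and "(Ts has_real_derivative fs (Ta t) (Ts t) / gs) (at t within D T)"
proof -
  obtain Da Ds where d: "(Ta has_real_derivative Da) (at t within D T)" "(Ts has_real_derivative Ds) (at t within D T)"
    "ga * Da = fa (Ta t) (Ts t)" "gs * Ds = fs (Ta t) (Ts t)"
    using s t unfolding is_solution_def by blast
  have "Da = fa (Ta t) (Ts t) / ga" "Ds = fs (Ta t) (Ts t) / gs" using d(3,4) ga gs by (auto simp: field_simps)
  then show "(Ta has_real_derivative fa (Ta t) (Ts t) / ga) (at t within D T)"
    "(Ts has_real_derivative fs (Ta t) (Ts t) / gs) (at t within D T)" using d(1,2) by auto
qed

lemma sol_init: "sol a0 s0 T Ta Ts \<Longrightarrow> Ta 0 = a0 \<and> Ts 0 = s0 \<and> 0 < T"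
  unfolding is_solution_def by auto

lemma Icc_sub_D: "ereal t1 < T \<Longrightarrow> {0..t1} \<subseteq> D T"
  by auto (meson ereal_less_eq(3) le_less_trans)

lemma sol_Icc:
  assumes s: "sol a0 s0 T Ta Ts" and t1: "ereal t1 < T" and t: "t \<in> {0..t1}"
  shows "(Ta has_real_derivative fa (Ta t) (Ts t) / ga) (at t within {0..t1})"
    and "(Ts has_real_derivative fs (Ta t) (Ts t) / gs) (at t within {0..t1})"
proof -
  have tT: "0 \<le> t" "ereal t < T" using t t1 Icc_sub_D[OF t1] by auto
  show "(Ta has_real_derivative fa (Ta t) (Ts t) / ga) (at t within {0..t1})"
    by (rule has_field_derivative_subset[OF sol_D(1)[OF s tT] Icc_sub_D[OF t1]])
  show "(Ts has_real_derivative fs (Ta t) (Ts t) / gs) (at t within {0..t1})"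
    by (rule has_field_derivative_subset[OF sol_D(2)[OF s tT] Icc_sub_D[OF t1]])
qed

lemma bnd_Icc:
  fixes f :: "real \<Rightarrow> real"
  assumes "continuous_on {a..b} f"
  shows "\<exists>B\<ge>0. \<forall>t\<in>{a..b}. \<bar>f t\<bar> \<le> B"
proof -
  have "bounded (f ` {a..b})" by (rule compact_imp_bounded[OF compact_continuous_image[OF assms compact_Icc]])
  then obtain B where "\<forall>x\<in>f ` {a..b}. \<bar>x\<bar> \<le> B" unfolding bounded_real by blast
  then show ?thesis by (intro exI[of _ "max B 0"]) auto
qed

lemma sol_bnd:
  assumes s: "sol a0 s0 T Ta Ts" and t1: "ereal t1 < T"
  shows "\<exists>B\<ge>0. \<forall>t\<in>{0..t1}. \<bar>Ta t\<bar> \<le> B \<and> \<bar>Ts t\<bar> \<le> B"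
proof -
  have "continuous_on {0..t1} Ta" by (rule DERIV_continuous_on[OF sol_Icc(1)[OF s t1]])
  from bnd_Icc[OF this] obtain B1 where B1: "B1 \<ge> 0" "\<forall>t\<in>{0..t1}. \<bar>Ta t\<bar> \<le> B1" by blast
  have "continuous_on {0..t1} Ts" by (rule DERIV_continuous_on[OF sol_Icc(2)[OF s t1]])
  from bnd_Icc[OF this] obtain B2 where B2: "B2 \<ge> 0" "\<forall>t\<in>{0..t1}. \<bar>Ts t\<bar> \<le> B2" by blast
  show ?thesis using B1 B2 by (intro exI[of _ "max B1 B2"]) force
qed

lemma sol_unique:
  assumes s1: "sol a0 s0 T1 Ta1 Ts1" and s2: "sol a0 s0 T2 Ta2 Ts2"
    and t: "0 \<le> t" "ereal t < T1" "ereal t < T2"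
  shows "Ta1 t = Ta2 t \<and> Ts1 t = Ts2 t"
proof -
  obtain B1 where B1: "B1 \<ge> 0" "\<forall>s\<in>{0..t}. \<bar>Ta1 s\<bar> \<le> B1 \<and> \<bar>Ts1 s\<bar> \<le> B1" using sol_bnd[OF s1 t(2)] by blast
  obtain B2 where B2: "B2 \<ge> 0" "\<forall>s\<in>{0..t}. \<bar>Ta2 s\<bar> \<le> B2 \<and> \<bar>Ts2 s\<bar> \<le> B2" using sol_bnd[OF s2 t(3)] by blast
  define B where "B = max B1 B2"
  define K where "K = KK B"
  have K0: "0 \<le> K" unfolding K_def B_def using KK_nn B1 by simp
  define w where "w s = (Ta1 s - Ta2 s)^2 + (Ts1 s - Ts2 s)^2" for s
  define w' where "w' s = 2 * (Ta1 s - Ta2 s) * (fa (Ta1 s) (Ts1 s) / ga - fa (Ta2 s) (Ts2 s) / ga)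
     + 2 * (Ts1 s - Ts2 s) * (fs (Ta1 s) (Ts1 s) / gs - fs (Ta2 s) (Ts2 s) / gs)" for s
  have "w t = 0"
  proof (rule gronwall0[of t w w' "4 * K * (1 / ga + 1 / gs)"])
    show "0 \<le> t" by fact
    fix s assume s: "s \<in> {0..t}"
    show "(w has_real_derivative w' s) (at s within {0..t})"
      unfolding w_def w'_def
      by (rule derivative_eq_intros sol_Icc[OF s1 t(2) s] sol_Icc[OF s2 t(3) s] refl)+ (use ga gs in \<open>simp add: field_simps\<close>)
    have bb: "\<bar>Ta1 s\<bar> \<le> B" "\<bar>Ts1 s\<bar> \<le> B" "\<bar>Ta2 s\<bar> \<le> B" "\<bar>Ts2 s\<bar> \<le> B"
      using B1 B2 s unfolding B_def by force+
    have "w' s = 2 * (Ta1 s - Ta2 s) * ((fa (Ta1 s) (Ts1 s) - fa (Ta2 s) (Ts2 s)) / ga)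
     + 2 * (Ts1 s - Ts2 s) * ((fs (Ta1 s) (Ts1 s) - fs (Ta2 s) (Ts2 s)) / gs)"
      unfolding w'_def by (simp add: diff_divide_distrib)
    also have "\<dots> \<le> 4 * K * (1 / ga + 1 / gs) * w s" unfolding w_def
      by (rule gron_aux[OF _ _ ga gs K0]) (unfold K_def, (rule fa_lip fs_lip; fact)+)
    finally show "w' s \<le> 4 * K * (1 / ga + 1 / gs) * w s" .
    show "0 \<le> w s" unfolding w_def by simp
  next
    show "w 0 = 0" using sol_init[OF s1] sol_init[OF s2] by (simp add: w_def)
  qed
  then show ?thesis unfolding w_def by (simp add: add_nonneg_eq_0_iff)
qed


lemma P1:
  assumes "\<bar>a\<bar> \<le> R" "\<bar>s\<bar> \<le> R"
  shows "min a 0 * fa a s \<le> (lam + eps * sig * R^3) * (min a 0 * min s 0)"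
proof (cases "0 \<le> a")
  case True then show ?thesis by simp
next
  case False
  then have a: "a < 0" by simp
  have es: "0 \<le> eps * sig" using eps sig by simp
  have e: "a * fa a s = - lam * a^2 + lam * (a * s) + (eps * sig) * (a * (\<bar>s\<bar>^3 * s))
     - (2 * eps * sig) * (\<bar>a\<bar>^3 * a * a) + q * (a * ba a)"
    unfolding rhs_a_def by (simp add: algebra_simps power2_eq_square)
  have t1: "a * s \<le> a * min s 0" using a by (cases "0 \<le> s") (auto simp: mult_nonpos_nonneg)
  have t2: "a * (\<bar>s\<bar>^3 * s) \<le> R^3 * (a * min s 0)"
  proof (cases "0 \<le> s")
    case True then show ?thesis using a by (simp add: mult_nonpos_nonneg)
  next
    case False
    then have "0 < a * s" using a by (simp add: mult_neg_neg)
    moreover have "\<bar>s\<bar>^3 \<le> R^3" using assms by (intro power_mono) auto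
    ultimately have "\<bar>s\<bar>^3 * (a * s) \<le> R^3 * (a * s)" by (intro mult_right_mono) auto
    then show ?thesis using False by (simp add: algebra_simps)
  qed
  have t3: "0 \<le> \<bar>a\<bar>^3 * a * a" by (simp add: mult.assoc)
  have t4: "a * ba a \<le> 0" using a ba_nn[of a] by (simp add: mult_nonpos_nonneg)
  have t5: "0 \<le> lam * a^2" using lam by simp
  have "lam * (a * s) \<le> lam * (a * min s 0)" by (rule mult_left_mono[OF t1 lam])
  moreover have "(eps * sig) * (a * (\<bar>s\<bar>^3 * s)) \<le> (eps * sig) * (R^3 * (a * min s 0))"
    by (rule mult_left_mono[OF t2 es])
  moreover have "0 \<le> (2 * eps * sig) * (\<bar>a\<bar>^3 * a * a)" using t3 es by simp
  moreover have "q * (a * ba a) \<le> 0" using t4 q by (simp add: mult_nonneg_nonpos)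
  ultimately have "a * fa a s \<le> lam * (a * min s 0) + (eps * sig) * (R^3 * (a * min s 0))"
    unfolding e using t5 by linarith
  then show ?thesis using a by (simp add: algebra_simps)
qed

lemma P2:
  assumes "\<bar>a\<bar> \<le> R" "\<bar>s\<bar> \<le> R"
  shows "min s 0 * fs a s \<le> (lam + eps * sig * R^3) * (min a 0 * min s 0)"
proof (cases "0 \<le> s")
  case True then show ?thesis by simp
next
  case False
  then have s: "s < 0" by simp
  have es: "0 \<le> eps * sig" using eps sig by simp
  have e: "s * fs a s = - lam * s^2 + lam * (s * a) - sig * (\<bar>s\<bar>^3 * s * s) + (eps * sig) * (s * (\<bar>a\<bar>^3 * a))
     + q * (s * bs s)"
    unfolding rhs_s_def by (simp add: algebra_simps power2_eq_square)
  have t1: "s * a \<le> s * min a 0" using s by (cases "0 \<le> a") (auto simp: mult_nonpos_nonneg)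
  have t2: "s * (\<bar>a\<bar>^3 * a) \<le> R^3 * (s * min a 0)"
  proof (cases "0 \<le> a")
    case True then show ?thesis using s by (simp add: mult_nonpos_nonneg)
  next
    case False
    then have "0 < s * a" using s by (simp add: mult_neg_neg)
    moreover have "\<bar>a\<bar>^3 \<le> R^3" using assms by (intro power_mono) auto
    ultimately have "\<bar>a\<bar>^3 * (s * a) \<le> R^3 * (s * a)" by (intro mult_right_mono) auto
    then show ?thesis using False by (simp add: algebra_simps)
  qed
  have t3: "0 \<le> \<bar>s\<bar>^3 * s * s" by (simp add: mult.assoc)
  have t4: "s * bs s \<le> 0" using s bs_nn[of s] by (simp add: mult_nonpos_nonneg)
  have t5: "0 \<le> lam * s^2" using lam by simp
  have "lam * (s * a) \<le> lam * (s * min a 0)" by (rule mult_left_mono[OF t1 lam])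
  moreover have "(eps * sig) * (s * (\<bar>a\<bar>^3 * a)) \<le> (eps * sig) * (R^3 * (s * min a 0))"
    by (rule mult_left_mono[OF t2 es])
  moreover have "0 \<le> sig * (\<bar>s\<bar>^3 * s * s)" using t3 sig by simp
  moreover have "q * (s * bs s) \<le> 0" using t4 q by (simp add: mult_nonneg_nonpos)
  ultimately have "s * fs a s \<le> lam * (s * min a 0) + (eps * sig) * (R^3 * (s * min a 0))"
    unfolding e using t5 by linarith
  then show ?thesis using s by (simp add: algebra_simps)
qed

lemma sol_pos:
  assumes s: "sol a0 s0 T Ta Ts" and a0: "0 \<le> a0" and s0: "0 \<le> s0" and t: "0 \<le> t" "ereal t < T"
  shows "0 \<le> Ta t \<and> 0 \<le> Ts t"
proof -
  obtain B where B: "B \<ge> 0" "\<forall>s\<in>{0..t}. \<bar>Ta s\<bar> \<le> B \<and> \<bar>Ts s\<bar> \<le> B" using sol_bnd[OF s t(2)] by blast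
  define Kp where "Kp = lam + eps * sig * B^3"
  have Kp: "0 \<le> Kp" unfolding Kp_def using lam eps sig B by simp
  define w where "w s = (min (Ta s) 0)^2 + (min (Ts s) 0)^2" for s
  define w' where "w' s = 2 * min (Ta s) 0 * (fa (Ta s) (Ts s) / ga) + 2 * min (Ts s) 0 * (fs (Ta s) (Ts s) / gs)" for s
  have "w t = 0"
  proof (rule gronwall0[of t w w' "Kp * (1 / ga + 1 / gs)"])
    show "0 \<le> t" by fact
    fix u assume u: "u \<in> {0..t}"
    show "(w has_real_derivative w' u) (at u within {0..t})"
      unfolding w_def w'_def
      by (intro DERIV_add DERIV_chain2[OF dmin] sol_Icc[OF s t(2) u])
    have bb: "\<bar>Ta u\<bar> \<le> B" "\<bar>Ts u\<bar> \<le> B" using B u by auto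
    define am where "am = min (Ta u) 0"
    define sm where "sm = min (Ts u) 0"
    have p1: "am * fa (Ta u) (Ts u) \<le> Kp * (am * sm)" unfolding am_def sm_def Kp_def by (rule P1[OF bb])
    have p2: "sm * fs (Ta u) (Ts u) \<le> Kp * (am * sm)" unfolding am_def sm_def Kp_def by (rule P2[OF bb])
    have q2: "2 * (am * sm) \<le> am^2 + sm^2"
    proof -
      have "0 \<le> (am - sm)^2" by simp
      then show ?thesis by (simp add: power2_eq_square algebra_simps)
    qed
    have "w' u = 2 * (am * fa (Ta u) (Ts u)) / ga + 2 * (sm * fs (Ta u) (Ts u)) / gs"
      unfolding w'_def am_def sm_def by simp
    also have "\<dots> \<le> 2 * (Kp * (am * sm)) / ga + 2 * (Kp * (am * sm)) / gs"
      using p1 p2 ga gs by (intro add_mono divide_right_mono) auto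
    also have "\<dots> = Kp * (1 / ga + 1 / gs) * (2 * (am * sm))" by (simp add: field_simps)
    also have "\<dots> \<le> Kp * (1 / ga + 1 / gs) * (am^2 + sm^2)"
      using q2 Kp ga gs by (intro mult_left_mono) auto
    finally show "w' u \<le> Kp * (1 / ga + 1 / gs) * w u" by (simp add: w_def am_def sm_def)
    show "0 \<le> w u" unfolding w_def by simp
  next
    show "w 0 = 0" using sol_init[OF s] a0 s0 by (simp add: w_def)
  qed
  then have "min (Ta t) 0 = 0 \<and> min (Ts t) 0 = 0" unfolding w_def by (simp add: add_nonneg_eq_0_iff)
  then show ?thesis by (simp add: min_def split: if_splits)
qed

end


lemma deriv_local:
  fixes f g :: "real \<Rightarrow> real"
  assumes d: "(f has_real_derivative Dv) (at t within A)" and tB: "t \<in> B" and Uo: "open U" "t \<in> U"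
    and AU: "A \<inter> U = B \<inter> U" and fg: "\<And>x. x \<in> B \<inter> U \<Longrightarrow> f x = g x"
  shows "(g has_real_derivative Dv) (at t within B)"
proof -
  have "at t within A = at t within B"
    by (rule at_within_nhd[OF Uo(2) Uo(1)]) (use AU in blast)
  with d have d': "(f has_real_derivative Dv) (at t within B)" by simp
  obtain e where e: "e > 0" "ball t e \<subseteq> U" using Uo openE by blast
  show ?thesis
  proof (rule has_field_derivative_transform_within[OF d' e(1) tB])
    fix x assume x: "x \<in> B" "dist x t < e"
    then have "x \<in> ball t e" by (simp add: dist_commute)
    then show "f x = g x" using e x fg by blast
  qed
qed

context sys begin

lemma sol_loc:
  assumes h: "0 < h" and i: "Ta 0 = a0" "Ts 0 = s0"
    and d: "\<And>t. t\<in>{0..h} \<Longrightarrow> (Ta has_real_derivative fa (Ta t) (Ts t) / ga) (at t within {0..h}) \<and>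
                  (Ts has_real_derivative fs (Ta t) (Ts t) / gs) (at t within {0..h})"
  shows "sol a0 s0 (ereal h) Ta Ts"
  unfolding is_solution_def
proof (intro conjI allI impI)
  show "0 < ereal h" using h by simp
  show "Ta 0 = a0" "Ts 0 = s0" by fact+
  fix t assume t: "0 \<le> t \<and> ereal t < ereal h"
  have sub: "D (ereal h) \<subseteq> {0..h}" by auto
  have tt: "t \<in> {0..h}" using t by auto
  show "\<exists>Da Ds. (Ta has_real_derivative Da) (at t within D (ereal h)) \<and>
             (Ts has_real_derivative Ds) (at t within D (ereal h)) \<and>
             ga * Da = fa (Ta t) (Ts t) \<and> gs * Ds = fs (Ta t) (Ts t)"
  proof (intro exI conjI)
    show "(Ta has_real_derivative fa (Ta t) (Ts t) / ga) (at t within D (ereal h))"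
      using has_field_derivative_subset[OF conjunct1[OF d[OF tt]] sub] .
    show "(Ts has_real_derivative fs (Ta t) (Ts t) / gs) (at t within D (ereal h))"
      using has_field_derivative_subset[OF conjunct2[OF d[OF tt]] sub] .
    show "ga * (fa (Ta t) (Ts t) / ga) = fa (Ta t) (Ts t)" using ga by simp
    show "gs * (fs (Ta t) (Ts t) / gs) = fs (Ta t) (Ts t)" using gs by simp
  qed
qed

lemma sol_shift:
  assumes s: "sol a0 s0 (ereal T) Ta Ts" and t0: "0 \<le> t0" "t0 < T"
  shows "sol (Ta t0) (Ts t0) (ereal (T - t0)) (\<lambda>s. Ta (t0 + s)) (\<lambda>s. Ts (t0 + s))"
  unfolding is_solution_def
proof (intro conjI allI impI)
  show "0 < ereal (T - t0)" using t0 by simp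
  show "Ta (t0 + 0) = Ta t0" "Ts (t0 + 0) = Ts t0" by simp_all
  fix t assume t: "0 \<le> t \<and> ereal t < ereal (T - t0)"
  have tt: "0 \<le> t0 + t" "ereal (t0 + t) < ereal T" using t t0 by auto
  have img: "(\<lambda>s. t0 + s) ` D (ereal (T - t0)) \<subseteq> D (ereal T)" using t0 by auto
  have g: "((\<lambda>s. t0 + s) has_real_derivative 1) (at t within D (ereal (T - t0)))"
    by (auto intro!: derivative_eq_intros)
  have da: "((\<lambda>s. Ta (t0 + s)) has_real_derivative fa (Ta (t0 + t)) (Ts (t0 + t)) / ga * 1) (at t within D (ereal (T - t0)))"
    using DERIV_image_chain[OF has_field_derivative_subset[OF sol_D(1)[OF s tt] img] g] by (simp add: o_def)
  have ds: "((\<lambda>s. Ts (t0 + s)) has_real_derivative fs (Ta (t0 + t)) (Ts (t0 + t)) / gs * 1) (at t within D (ereal (T - t0)))"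
    using DERIV_image_chain[OF has_field_derivative_subset[OF sol_D(2)[OF s tt] img] g] by (simp add: o_def)
  show "\<exists>Da Ds. ((\<lambda>s. Ta (t0 + s)) has_real_derivative Da) (at t within D (ereal (T - t0))) \<and>
             ((\<lambda>s. Ts (t0 + s)) has_real_derivative Ds) (at t within D (ereal (T - t0))) \<and>
             ga * Da = fa (Ta (t0 + t)) (Ts (t0 + t)) \<and> gs * Ds = fs (Ta (t0 + t)) (Ts (t0 + t))"
    using da ds ga gs by (intro exI conjI) auto
qed

end


context sys begin

theorem max_blowup:
  assumes a0: "0 \<le> a0" and s0: "0 \<le> s0"
    and al: "0 < \<alpha>" and be: "0 < \<beta>"
    and Bnd: "\<And>T Ta Ts. sol a0 s0 T Ta Ts \<Longrightarrow> T \<le> ereal Tb"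
    and Mono: "\<And>T Ta Ts x y. sol a0 s0 T Ta Ts \<Longrightarrow> 0 \<le> x \<Longrightarrow> x \<le> y \<Longrightarrow> ereal y < T \<Longrightarrow>
                 \<alpha> * Ta x + \<beta> * Ts x \<le> \<alpha> * Ta y + \<beta> * Ts y"
  shows "unique_maximal_solution_blows_up ga gs lam eps sig q ba bs a0 s0"
proof -
  define S where "S = {T::real. \<exists>Ta Ts. sol a0 s0 (ereal T) Ta Ts}"
  have fin: "\<exists>r. T = ereal r \<and> 0 < r \<and> r \<le> Tb" if "sol a0 s0 T Ta Ts" for T Ta Ts
  proof -
    have "0 < T" "T \<le> ereal Tb" using sol_init[OF that] Bnd[OF that] by auto
    then show ?thesis by (cases T) auto
  qed
  obtain h0 where h0: "0 < h0" and loc0: "\<exists>Ta Ts. Ta 0 = a0 \<and> Ts 0 = s0 \<and>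
     (\<forall>t\<in>{0..h0}. (Ta has_real_derivative fa (Ta t) (Ts t) / ga) (at t within {0..h0}) \<and>
                  (Ts has_real_derivative fs (Ta t) (Ts t) / gs) (at t within {0..h0}))"
    using local_ex[of "max \<bar>a0\<bar> \<bar>s0\<bar>"] by force
  obtain Ta0 Ts0 where sol0: "sol a0 s0 (ereal h0) Ta0 Ts0"
    using loc0 sol_loc[OF h0] by blast
  have h0S: "h0 \<in> S" unfolding S_def using sol0 by blast
  have Sne: "S \<noteq> {}" using h0S by blast
  have bdd: "bdd_above S" unfolding S_def bdd_above_def using fin by fastforce
  define Tm where "Tm = Sup S"
  have leTm: "r \<le> Tm" if "r \<in> S" for r unfolding Tm_def by (rule cSup_upper[OF that bdd])
  have Tm0: "0 < Tm" using leTm[OF h0S] h0 by simp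
  have exbig: "\<exists>r\<in>S. t < r" if "t < Tm" for t
    using that less_cSup_iff[OF Sne bdd] unfolding Tm_def by blast
  define P where "P t = (SOME p. \<exists>r Ta Ts. t < r \<and> sol a0 s0 (ereal r) Ta Ts \<and> p = (Ta t, Ts t))" for t
  define TA where "TA t = fst (P t)" for t
  define TS where "TS t = snd (P t)" for t
  have agree: "TA t = Ta t \<and> TS t = Ts t" if s: "sol a0 s0 (ereal r) Ta Ts" and t: "0 \<le> t" "t < r" for r Ta Ts t
  proof -
    have ex: "\<exists>p. \<exists>r Ta Ts. t < r \<and> sol a0 s0 (ereal r) Ta Ts \<and> p = (Ta t, Ts t)"
      using s t by blast
    obtain r' Ta' Ts' where w: "t < r'" "sol a0 s0 (ereal r') Ta' Ts'" "P t = (Ta' t, Ts' t)"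
      using someI_ex[OF ex] unfolding P_def by blast
    have "Ta' t = Ta t \<and> Ts' t = Ts t" by (rule sol_unique[OF w(2) s]) (use t w in auto)
    then show ?thesis using w(3) by (simp add: TA_def TS_def)
  qed
  have solM: "sol a0 s0 (ereal Tm) TA TS"
    unfolding is_solution_def
  proof (intro conjI allI impI)
    show "0 < ereal Tm" using Tm0 by simp
    show "TA 0 = a0" "TS 0 = s0" using agree[OF sol0, of 0] sol_init[OF sol0] h0 by auto
    fix t assume t: "0 \<le> t \<and> ereal t < ereal Tm"
    obtain r where r: "r \<in> S" "t < r" using exbig t by auto
    obtain Ta Ts where s: "sol a0 s0 (ereal r) Ta Ts" using r S_def by blast
    have rT: "r \<le> Tm" using leTm[OF r(1)] .
    have tt: "0 \<le> t" "ereal t < ereal r" using t r by auto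
    have AU: "D (ereal r) \<inter> {..<r} = D (ereal Tm) \<inter> {..<r}" using rT by auto
    have tB: "t \<in> D (ereal Tm)" using t by auto
    have ag: "\<And>x. x \<in> D (ereal Tm) \<inter> {..<r} \<Longrightarrow> Ta x = TA x \<and> Ts x = TS x"
      using agree[OF s] by auto
    have dA: "(TA has_real_derivative fa (Ta t) (Ts t) / ga) (at t within D (ereal Tm))"
      by (rule deriv_local[OF sol_D(1)[OF s tt] tB open_lessThan _ AU]) (use r ag in auto)
    have dS: "(TS has_real_derivative fs (Ta t) (Ts t) / gs) (at t within D (ereal Tm))"
      by (rule deriv_local[OF sol_D(2)[OF s tt] tB open_lessThan _ AU]) (use r ag in auto)
    have e: "TA t = Ta t" "TS t = Ts t" using agree[OF s tt(1) r(2)] by auto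
    show "\<exists>Da Ds. (TA has_real_derivative Da) (at t within D (ereal Tm)) \<and>
             (TS has_real_derivative Ds) (at t within D (ereal Tm)) \<and>
             ga * Da = fa (TA t) (TS t) \<and> gs * Ds = fs (TA t) (TS t)"
      using dA dS ga gs e by (intro exI conjI) auto
  qed
  have maxM: "is_maximal_solution ga gs lam eps sig q ba bs a0 s0 (ereal Tm) TA TS"
    unfolding is_maximal_solution_def
  proof (intro conjI allI impI solM)
    fix T' Ta' Ts' assume T': "ereal Tm \<le> T'" "sol a0 s0 T' Ta' Ts'"
    obtain r where r: "T' = ereal r" using fin[OF T'(2)] by blast
    have "r \<in> S" using T'(2) r S_def by blast
    then show "T' = ereal Tm" using leTm T'(1) r by force
  qed
  have uniqM: "T' = ereal Tm \<and> (\<forall>t. 0 \<le> t \<and> ereal t < ereal Tm \<longrightarrow> Ta' t = TA t \<and> Ts' t = TS t)"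
    if m: "is_maximal_solution ga gs lam eps sig q ba bs a0 s0 T' Ta' Ts'" for T' Ta' Ts'
  proof -
    have s': "sol a0 s0 T' Ta' Ts'" using m unfolding is_maximal_solution_def by blast
    obtain r where r: "T' = ereal r" using fin[OF s'] by blast
    have rS: "r \<in> S" using s' r S_def by blast
    have ag: "\<forall>t. 0 \<le> t \<and> ereal t < T' \<longrightarrow> TA t = Ta' t \<and> TS t = Ts' t"
      using agree s' r by auto
    have "T' \<le> ereal Tm" using leTm[OF rS] r by simp
    then have eq: "ereal Tm = T'"
      using m solM ag unfolding is_maximal_solution_def by blast
    show ?thesis using eq ag by auto
  qed
  define E where "E t = \<alpha> * TA t + \<beta> * TS t" for t
  have posM: "0 \<le> TA t \<and> 0 \<le> TS t" if "0 \<le> t" "t < Tm" for t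
    using sol_pos[OF solM a0 s0] that by auto
  have monoM: "E x \<le> E y" if "0 \<le> x" "x \<le> y" "y < Tm" for x y
    unfolding E_def using Mono[OF solM] that by auto
  define c where "c = max \<alpha> \<beta>"
  have c0: "0 < c" using al by (simp add: c_def)
  have Ele: "E t \<le> c * (\<bar>TA t\<bar> + \<bar>TS t\<bar>)" if "0 \<le> t" "t < Tm" for t
  proof -
    have p: "0 \<le> TA t" "0 \<le> TS t" using posM[OF that] by auto
    have "\<alpha> * TA t \<le> c * TA t" "\<beta> * TS t \<le> c * TS t" using p by (auto simp: c_def intro: mult_right_mono)
    then show ?thesis using p by (simp add: E_def algebra_simps)
  qed
  have unb: "\<forall>M. \<exists>t. 0 \<le> t \<and> t < Tm \<and> M < E t"
  proof (rule ccontr)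
    assume "\<not> ?thesis"
    then obtain M where M': "\<forall>t. 0 \<le> t \<and> t < Tm \<longrightarrow> E t \<le> M" by (meson not_le)
    have M: "\<And>t. 0 \<le> t \<Longrightarrow> t < Tm \<Longrightarrow> E t \<le> M" using M' by blast
    define R where "R = max (M / \<alpha>) (M / \<beta>)"
    have M0: "0 \<le> M"
    proof -
      have p: "0 \<le> TA 0" "0 \<le> TS 0" using posM[of 0] Tm0 by auto
      have "0 \<le> \<alpha> * TA 0 + \<beta> * TS 0" using p al be by simp
      then show ?thesis using M[of 0] Tm0 by (simp add: E_def)
    qed
    have R0: "0 \<le> R" using M0 al unfolding R_def by (simp add: le_max_iff_disj)
    have bndR: "\<bar>TA t\<bar> \<le> R \<and> \<bar>TS t\<bar> \<le> R" if "0 \<le> t" "t < Tm" for t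
    proof -
      have p: "0 \<le> TA t" "0 \<le> TS t" using posM[OF that] by auto
      have "\<alpha> * TA t \<le> M" "\<beta> * TS t \<le> M" using M[OF that] p al be unfolding E_def
        by (smt (verit) mult_nonneg_nonneg)+
      then have "TA t \<le> M / \<alpha>" "TS t \<le> M / \<beta>" using al be by (simp_all add: field_simps)
      then show ?thesis using p by (auto simp: R_def)
    qed
    obtain h where h: "0 < h" and loc: "\<And>a s. \<bar>a\<bar> \<le> R \<Longrightarrow> \<bar>s\<bar> \<le> R \<Longrightarrow> (\<exists>Ta Ts. Ta 0 = a \<and> Ts 0 = s \<and>
     (\<forall>t\<in>{0..h}. (Ta has_real_derivative fa (Ta t) (Ts t) / ga) (at t within {0..h}) \<and>
                  (Ts has_real_derivative fs (Ta t) (Ts t) / gs) (at t within {0..h})))"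
      using local_ex[OF R0] by blast
    define t0 where "t0 = max 0 (Tm - h/2)"
    have t0: "0 \<le> t0" "t0 < Tm" "Tm < t0 + h" using h Tm0 by (auto simp: t0_def)
    obtain Wa Ws where W0: "Wa 0 = TA t0" "Ws 0 = TS t0" and
      Wd: "\<And>t. t\<in>{0..h} \<Longrightarrow> (Wa has_real_derivative fa (Wa t) (Ws t) / ga) (at t within {0..h}) \<and>
                  (Ws has_real_derivative fs (Wa t) (Ws t) / gs) (at t within {0..h})"
      using loc[OF conjunct1[OF bndR[OF t0(1,2)]] conjunct2[OF bndR[OF t0(1,2)]]] by blast
    have solW: "sol (TA t0) (TS t0) (ereal h) Wa Ws" by (rule sol_loc[OF h W0 Wd])
    have solSh: "sol (TA t0) (TS t0) (ereal (Tm - t0)) (\<lambda>s. TA (t0 + s)) (\<lambda>s. TS (t0 + s))"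
      by (rule sol_shift[OF solM t0(1,2)])
    have agW: "TA x = Wa (x - t0) \<and> TS x = Ws (x - t0)" if "t0 \<le> x" "x < Tm" for x
      using sol_unique[OF solSh solW, of "x - t0"] that t0 by auto
    define T2 where "T2 = t0 + h"
    define ZA where "ZA x = (if x < Tm then TA x else Wa (x - t0))" for x
    define ZS where "ZS x = (if x < Tm then TS x else Ws (x - t0))" for x
    have solZ: "sol a0 s0 (ereal T2) ZA ZS"
      unfolding is_solution_def
    proof (intro conjI allI impI)
      show "0 < ereal T2" using t0 h by (simp add: T2_def)
      show "ZA 0 = a0" "ZS 0 = s0" using sol_init[OF solM] Tm0 by (auto simp: ZA_def ZS_def)
      fix t assume t: "0 \<le> t \<and> ereal t < ereal T2"
      have tB: "t \<in> D (ereal T2)" using t by auto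
      show "\<exists>Da Ds. (ZA has_real_derivative Da) (at t within D (ereal T2)) \<and>
             (ZS has_real_derivative Ds) (at t within D (ereal T2)) \<and>
             ga * Da = fa (ZA t) (ZS t) \<and> gs * Ds = fs (ZA t) (ZS t)"
      proof (cases "t < Tm")
        case True
        have tt: "0 \<le> t" "ereal t < ereal Tm" using t True by auto
        have AU: "D (ereal Tm) \<inter> {..<Tm} = D (ereal T2) \<inter> {..<Tm}" using t0 by (auto simp: T2_def)
        have dA: "(ZA has_real_derivative fa (TA t) (TS t) / ga) (at t within D (ereal T2))"
          by (rule deriv_local[OF sol_D(1)[OF solM tt] tB open_lessThan _ AU]) (use True in \<open>auto simp: ZA_def\<close>)
        have dS: "(ZS has_real_derivative fs (TA t) (TS t) / gs) (at t within D (ereal T2))"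
          by (rule deriv_local[OF sol_D(2)[OF solM tt] tB open_lessThan _ AU]) (use True in \<open>auto simp: ZS_def\<close>)
        show ?thesis using dA dS ga gs True by (intro exI conjI) (auto simp: ZA_def ZS_def)
      next
        case False
        have tin: "t - t0 \<in> {0..h}" using t False t0 by (auto simp: T2_def)
        have img: "(\<lambda>x. x - t0) ` {t0..T2} \<subseteq> {0..h}" by (auto simp: T2_def)
        have g: "((\<lambda>x. x - t0) has_real_derivative 1) (at t within {t0..T2})"
          by (auto intro!: derivative_eq_intros)
        have dWa: "((\<lambda>x. Wa (x - t0)) has_real_derivative fa (Wa (t - t0)) (Ws (t - t0)) / ga * 1) (at t within {t0..T2})"
          using DERIV_image_chain[OF has_field_derivative_subset[OF conjunct1[OF Wd[OF tin]] img] g] by (simp add: o_def)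
        have dWs: "((\<lambda>x. Ws (x - t0)) has_real_derivative fs (Wa (t - t0)) (Ws (t - t0)) / gs * 1) (at t within {t0..T2})"
          using DERIV_image_chain[OF has_field_derivative_subset[OF conjunct2[OF Wd[OF tin]] img] g] by (simp add: o_def)
        have tU: "t \<in> {t0<..<T2}" using t False t0 by auto
        have AU: "{t0..T2} \<inter> {t0<..<T2} = D (ereal T2) \<inter> {t0<..<T2}" using t0 by auto
        have eqA: "Wa (x - t0) = ZA x" "Ws (x - t0) = ZS x" if "x \<in> D (ereal T2) \<inter> {t0<..<T2}" for x
          using agW[of x] that by (auto simp: ZA_def ZS_def)
        have dA: "(ZA has_real_derivative fa (Wa (t - t0)) (Ws (t - t0)) / ga) (at t within D (ereal T2))"
          using deriv_local[OF dWa tB open_greaterThanLessThan tU AU] eqA(1) by simp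
        have dS: "(ZS has_real_derivative fs (Wa (t - t0)) (Ws (t - t0)) / gs) (at t within D (ereal T2))"
          using deriv_local[OF dWs tB open_greaterThanLessThan tU AU] eqA(2) by simp
        show ?thesis using dA dS ga gs False by (intro exI conjI) (auto simp: ZA_def ZS_def)
      qed
    qed
    then have "T2 \<in> S" unfolding S_def by blast
    then have "T2 \<le> Tm" by (rule leTm)
    then show False using t0 by (simp add: T2_def)
  qed
  have blow: "blows_up (ereal Tm) TA TS"
    unfolding blows_up_def
  proof (intro conjI)
    show "ereal Tm < \<infinity>" by simp
    show "filterlim (\<lambda>t. \<bar>TA t\<bar> + \<bar>TS t\<bar>) at_top (at_left (real_of_ereal (ereal Tm)))"
      unfolding real_of_ereal.simps filterlim_at_top
    proof
      fix Z :: real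
      obtain t1 where t1: "0 \<le> t1" "t1 < Tm" "c * Z < E t1" using unb by blast
      show "\<forall>\<^sub>F x in at_left Tm. Z \<le> \<bar>TA x\<bar> + \<bar>TS x\<bar>"
        using eventually_at_left_real[OF t1(2)]
      proof (rule eventually_mono)
        fix x assume x: "x \<in> {t1<..<Tm}"
        have "c * Z < E x" using monoM[of t1 x] t1 x by auto
        also have "\<dots> \<le> c * (\<bar>TA x\<bar> + \<bar>TS x\<bar>)" using Ele[of x] x t1 by auto
        finally show "Z \<le> \<bar>TA x\<bar> + \<bar>TS x\<bar>" using c0 by simp
      qed
    qed
  qed
  show ?thesis
    unfolding unique_maximal_solution_blows_up_def
    using maxM blow uniqM by blast
qed

end


lemma Icc_sub_D': "ereal t1 < T \<Longrightarrow> {0..t1} \<subseteq> D T"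
  by auto (meson ereal_less_eq(3) le_less_trans)

lemma leT: "z \<le> t \<Longrightarrow> ereal t < T \<Longrightarrow> ereal z < T"
  by (meson ereal_less_eq(3) le_less_trans)

lemma blow_ineq:
  fixes u u' :: "real \<Rightarrow> real" and T :: ereal
  assumes d: "\<And>t. 0 \<le> t \<Longrightarrow> ereal t < T \<Longrightarrow> (u has_real_derivative u' t) (at t within D T)"
    and c: "0 < c" and u0: "0 < u 0" and T0: "0 < T"
    and ineq: "\<And>t. 0 \<le> t \<Longrightarrow> ereal t < T \<Longrightarrow> u 0 / 2 \<le> u t \<Longrightarrow> c * (u t)^4 \<le> u' t"
  shows "(\<forall>x y. 0 \<le> x \<longrightarrow> x \<le> y \<longrightarrow> ereal y < T \<longrightarrow> u x \<le> u y) \<and> T \<le> ereal (1 / (3 * c * (u 0)^3))"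
proof -
  have dI: "(u has_real_derivative u' z) (at z within {x..y})" if "0 \<le> x" "ereal y < T" "z \<in> {x..y}" for x y z
  proof -
    have "{x..y} \<subseteq> {0..y}" using that(1) by auto
    then have sub: "{x..y} \<subseteq> D T" using Icc_sub_D'[OF that(2)] by blast
    have "0 \<le> z" "ereal z < T" using that sub by auto
    from has_field_derivative_subset[OF d[OF this] sub] show ?thesis .
  qed
  have pos: "0 < u' z" if "0 \<le> z" "ereal z < T" "u 0 / 2 \<le> u z" for z
  proof -
    have "0 < u z" using that u0 by linarith
    then have "0 < c * (u z)^4" using c by simp
    then show ?thesis using ineq[OF that] by linarith
  qed
  have ge: "u 0 \<le> u t" if t: "0 \<le> t" "ereal t < T" for t
  proof (rule ccontr)
    assume "\<not> u 0 \<le> u t"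
    then have ut: "u t < u 0" by simp
    define l where "l = max (u t) (u 0 / 2)"
    have l: "l < u 0" "u 0 / 2 \<le> l" using ut u0 by (auto simp: l_def)
    define Sl where "Sl = {s \<in> {0..t}. u s \<le> l}"
    have cont: "continuous_on {0..t} u" by (rule DERIV_continuous_on) (rule dI[OF order.refl t(2)])
    have cl: "closed Sl" unfolding Sl_def
      by (rule continuous_on_closed_Collect_le[OF cont continuous_on_const closed_atLeastAtMost])
    have ne: "t \<in> Sl" using t by (simp add: Sl_def l_def)
    then have "Sl \<noteq> {}" by blast
    moreover have "bdd_below Sl" unfolding Sl_def by (rule bdd_belowI[of _ 0]) auto
    ultimately have s1S: "Inf Sl \<in> Sl" using cl closed_contains_Inf by blast
    define s1 where "s1 = Inf Sl"
    have s1: "0 \<le> s1" "s1 \<le> t" "u s1 \<le> l" using s1S by (auto simp: Sl_def s1_def)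
    have s1pos: "0 < s1" using s1 l by (cases "s1 = 0") auto
    have above: "l < u z" if "0 < z" "z < s1" for z
    proof (rule ccontr)
      assume "\<not> l < u z"
      then have "z \<in> Sl" using that s1 by (auto simp: Sl_def)
      then have "s1 \<le> z" unfolding s1_def by (rule cInf_lower) fact
      then show False using that by simp
    qed
    have s1T: "ereal s1 < T" using s1 t by (meson ereal_less_eq(3) le_less_trans)
    obtain z where z: "0 < z" "z < s1" "u s1 - u 0 = (s1 - 0) * u' z"
      using mvt_int[OF s1pos dI[OF order.refl s1T]] by blast
    have zT: "ereal z < T" using z s1T leT[of z s1 T] by auto
    have "0 < u' z" using pos[of z] z above[OF z(1,2)] l zT by auto
    then have "0 < (s1 - 0) * u' z" using s1pos by simp
    then show False using z(3) s1 l by linarith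
  qed
  have mono: "u x \<le> u y" if "0 \<le> x" "x \<le> y" "ereal y < T" for x y
  proof (rule mono_deriv[OF that(2)])
    show "\<And>z. z \<in> {x..y} \<Longrightarrow> (u has_real_derivative u' z) (at z within {x..y})" using dI[OF that(1,3)] .
    fix z assume z: "z \<in> {x<..<y}"
    have zT: "0 \<le> z" "ereal z < T" using z that leT[of z y T] by auto
    show "0 \<le> u' z" using pos[OF zT] ge[OF zT] u0 by auto
  qed
  define B where "B = 1 / (3 * c * (u 0)^3)"
  have tb: "t < B" if t: "0 \<le> t" "ereal t < T" for t
  proof (cases "t = 0")
    case True then show ?thesis using c u0 by (simp add: B_def)
  next
    case False
    then have t0: "0 < t" using t by simp
    have upos: "0 < u s" if "s \<in> {0..t}" for s
      using ge[of s] that t u0 leT[of s t T] by force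
    define p where "p z = - (3 * (u z)^2 * u' z) / ((u z)^3)^2" for z
    have dp: "((\<lambda>s. 1 / (u s)^3) has_real_derivative p z) (at z within {0..t})" if z: "z \<in> {0..t}" for z
      unfolding p_def using upos[OF z]
      by (auto intro!: derivative_eq_intros dI[OF order.refl t(2) z])
    obtain z where z: "0 < z" "z < t" "1 / (u t)^3 - 1 / (u 0)^3 = (t - 0) * p z"
      using mvt_int[OF t0 dp] by blast
    have zin: "z \<in> {0..t}" using z by auto
    have zT: "0 \<le> z" "ereal z < T" using z t leT[of z t T] by auto
    have uz: "0 < u z" using upos[OF zin] .
    have "c * (u z)^4 \<le> u' z" using ineq[OF zT] ge[OF zT] u0 by auto
    then have "3 * c \<le> 3 * u' z / (u z)^4" using uz by (simp add: field_simps)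
    also have "3 * u' z / (u z)^4 = - p z" unfolding p_def using uz
      by (simp add: field_simps power2_eq_square power3_eq_cube power4_eq_xxxx)
    finally have "3 * c \<le> - p z" .
    then have "t * (3 * c) \<le> t * (- p z)" using t0 by (intro mult_left_mono) auto
    then have A: "3 * c * t \<le> - (t * p z)" by (simp add: algebra_simps)
    have C: "0 < 1 / (u t)^3" using upos[of t] t0 by simp
    have Z: "1 / (u t)^3 - 1 / (u 0)^3 = t * p z" using z(3) by simp
    have "3 * c * t < 1 / (u 0)^3" using A C Z by linarith
    then show ?thesis unfolding B_def using c u0 by (simp add: field_simps)
  qed
  have "T \<le> ereal B"
  proof (rule ccontr)
    assume "\<not> T \<le> ereal B"
    then have "ereal B < T" by simp
    moreover have "0 \<le> B" unfolding B_def using c u0 by simp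
    ultimately show False using tb[of B] by simp
  qed
  then show ?thesis using mono B_def by auto
qed


lemma pow4: "((x::real) + y)^4 \<le> 8 * (x^4 + y^4)"
proof -
  have 1: "(x + y)^2 \<le> 2 * (x^2 + y^2)"
  proof -
    have "0 \<le> (x - y)^2" by simp
    then show ?thesis by (simp add: power2_eq_square algebra_simps)
  qed
  have 2: "(x^2 + y^2)^2 \<le> 2 * (x^4 + y^4)"
  proof -
    have "0 \<le> (x^2 - y^2)^2" by simp
    then show ?thesis by (simp add: power2_eq_square power4_eq_xxxx algebra_simps)
  qed
  have "(x + y)^4 = ((x + y)^2)^2" by simp
  also have "\<dots> \<le> (2 * (x^2 + y^2))^2" using 1 by (intro power_mono) auto
  also have "\<dots> = 4 * (x^2 + y^2)^2" by (subst power_mult_distrib) simp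
  also have "\<dots> \<le> 4 * (2 * (x^4 + y^4))" using 2 by simp
  finally show ?thesis by simp
qed

context sys begin

definition "kk = (2 + eps) / 2"
definition "dd = (eps - 2) / 2"
definition "GG = ga + kk * gs"

lemma kk: "1 < kk" "2 < kk" and dd: "0 < dd" and GG: "0 < GG"
  using eps ga gs by (auto simp: kk_def dd_def GG_def intro!: add_pos_pos mult_pos_pos)

lemma E_deriv:
  assumes s: "sol a0 s0 T Ta Ts" and t: "0 \<le> t" "ereal t < T"
  shows "((\<lambda>t. ga * Ta t + kk * gs * Ts t + C) has_real_derivative fa (Ta t) (Ts t) + kk * fs (Ta t) (Ts t)) (at t within D T)"
  using ga gs
  by (auto intro!: derivative_eq_intros sol_D[OF s t])

lemma E_lower:
  assumes a: "0 \<le> a" and s: "0 \<le> s"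
  shows "- lam * (kk - 1) * s + sig * dd * (a^4 + s^4) + q * ba a + kk * q * bs s \<le> fa a s + kk * fs a s"
proof -
  have a4: "\<bar>a\<bar>^3 * a = a^4" using a by (simp add: power_numeral_reduce)
  have s4: "\<bar>s\<bar>^3 * s = s^4" using s by (simp add: power_numeral_reduce)
  have e: "fa a s + kk * fs a s = lam * (kk - 1) * a - lam * (kk - 1) * s + sig * dd * s^4 + eps * sig * dd * a^4
     + q * ba a + kk * q * bs s"
    unfolding rhs_a_def rhs_s_def kk_def dd_def abs_of_nonneg[OF a] abs_of_nonneg[OF s]
    by (simp add: field_simps power4_eq_xxxx power3_eq_cube)
  have "0 \<le> lam * (kk - 1) * a" using lam kk a by simp
  moreover have "sig * dd * a^4 \<le> eps * sig * dd * a^4"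
  proof -
    have "0 \<le> sig * dd * a^4" using sig dd by simp
    then have "1 * (sig * dd * a^4) \<le> eps * (sig * dd * a^4)" using eps by (intro mult_right_mono) auto
    then show ?thesis by (simp add: mult.assoc)
  qed
  ultimately show ?thesis unfolding e by (simp add: algebra_simps)
qed

lemma E_quart:
  assumes a: "0 \<le> a" and s: "0 \<le> s"
  shows "(ga * a + kk * gs * s)^4 \<le> 8 * GG^4 * (a^4 + s^4)"
proof -
  have "ga * a + kk * gs * s \<le> GG * (a + s)"
    using a s ga gs kk unfolding GG_def by (simp add: algebra_simps mult_left_mono mult_right_mono)
  moreover have "0 \<le> ga * a + kk * gs * s" using a s ga gs kk by simp
  ultimately have "(ga * a + kk * gs * s)^4 \<le> (GG * (a + s))^4" by (intro power_mono) auto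
  also have "\<dots> = GG^4 * (a + s)^4" by (simp add: power_mult_distrib)
  also have "\<dots> \<le> GG^4 * (8 * (a^4 + s^4))" using pow4[of a s] GG by (intro mult_left_mono) auto
  finally show ?thesis by (simp add: algebra_simps)
qed

lemma part_a:
  assumes lam0: "lam = 0" and bm: "0 < bm" and bsm: "\<And>x. bm \<le> bs x" and q0: "0 < q"
    and a0: "0 \<le> a0" and s0: "0 \<le> s0"
  shows "unique_maximal_solution_blows_up ga gs lam eps sig q ba bs a0 s0"
proof -
  define c1 where "c1 = sig * dd / (8 * GG^4)"
  define d1 where "d1 = kk * q * bm"
  define m where "m = min c1 d1"
  define c where "c = m / 8"
  define U0 where "U0 = ga * a0 + kk * gs * s0 + 1"
  have c1: "0 < c1" unfolding c1_def using sig dd GG by simp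
  have d1: "0 < d1" unfolding d1_def using kk q0 bm by simp
  have m: "0 < m" using c1 d1 by (simp add: m_def)
  have c: "0 < c" using m by (simp add: c_def)
  have U0: "0 < U0" unfolding U0_def using a0 s0 ga gs kk by (simp add: add_nonneg_pos)
  have key: "(\<forall>x y. 0 \<le> x \<longrightarrow> x \<le> y \<longrightarrow> ereal y < T \<longrightarrow>
      (ga * Ta x + kk * gs * Ts x + 1) \<le> (ga * Ta y + kk * gs * Ts y + 1)) \<and> T \<le> ereal (1 / (3 * c * U0^3))"
    if s: "sol a0 s0 T Ta Ts" for T Ta Ts
  proof -
    have u0: "ga * Ta 0 + kk * gs * Ts 0 + 1 = U0" using sol_init[OF s] by (simp add: U0_def)
    have "(\<forall>x y. 0 \<le> x \<longrightarrow> x \<le> y \<longrightarrow> ereal y < T \<longrightarrow>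
      (\<lambda>t. ga * Ta t + kk * gs * Ts t + 1) x \<le> (\<lambda>t. ga * Ta t + kk * gs * Ts t + 1) y) \<and>
      T \<le> ereal (1 / (3 * c * ((\<lambda>t. ga * Ta t + kk * gs * Ts t + 1) 0)^3))"
    proof (rule blow_ineq[where u'="\<lambda>t. fa (Ta t) (Ts t) + kk * fs (Ta t) (Ts t)"])
      show "\<And>t. 0 \<le> t \<Longrightarrow> ereal t < T \<Longrightarrow> ((\<lambda>t. ga * Ta t + kk * gs * Ts t + 1) has_real_derivative
          fa (Ta t) (Ts t) + kk * fs (Ta t) (Ts t)) (at t within D T)"
        by (rule E_deriv[OF s])
      show "0 < c" by fact
      show "0 < ga * Ta 0 + kk * gs * Ts 0 + 1" using u0 U0 by simp
      show "0 < T" using sol_init[OF s] by simp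
      fix t assume t: "0 \<le> t" "ereal t < T"
      define a where "a = Ta t"
      define b where "b = Ts t"
      define E where "E = ga * a + kk * gs * b"
      have ab: "0 \<le> a" "0 \<le> b" using sol_pos[OF s a0 s0 t] by (auto simp: a_def b_def)
      have E0: "0 \<le> E" using ab ga gs kk by (simp add: E_def)
      have low: "sig * dd * (a^4 + b^4) + d1 \<le> fa a b + kk * fs a b"
      proof -
        have "kk * q * bm \<le> kk * q * bs b" using bsm[of b] kk q0 by simp
        moreover have "0 \<le> q * ba a" using q0 ba_nn[of a] by simp
        ultimately show ?thesis using E_lower[OF ab] lam0 by (simp add: d1_def)
      qed
      have q1: "c1 * E^4 \<le> sig * dd * (a^4 + b^4)"
      proof -
        have "c1 * E^4 \<le> c1 * (8 * GG^4 * (a^4 + b^4))" using E_quart[OF ab] c1 by (simp add: E_def)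
        also have "\<dots> = sig * dd * (a^4 + b^4)" unfolding c1_def using GG by simp
        finally show ?thesis .
      qed
      have "c * (E + 1)^4 \<le> c * (8 * (E^4 + 1^4))" using pow4[of E 1] c by (intro mult_left_mono) auto
      also have "\<dots> = m * E^4 + m" by (simp add: c_def algebra_simps)
      also have "\<dots> \<le> c1 * E^4 + d1" using E0 by (intro add_mono mult_right_mono) (auto simp: m_def)
      also have "\<dots> \<le> fa a b + kk * fs a b" using q1 low by simp
      finally show "c * ((\<lambda>t. ga * Ta t + kk * gs * Ts t + 1) t)^4 \<le> fa (Ta t) (Ts t) + kk * fs (Ta t) (Ts t)"
        by (simp add: E_def a_def b_def)
    qed
    then show ?thesis using u0 by simp
  qed
  show ?thesis
  proof (rule max_blowup[OF a0 s0 ga _ _])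
    show "0 < kk * gs" using kk gs by simp
    show "\<And>T Ta Ts. sol a0 s0 T Ta Ts \<Longrightarrow> T \<le> ereal (1 / (3 * c * U0^3))" using key by blast
    show "\<And>T Ta Ts x y. sol a0 s0 T Ta Ts \<Longrightarrow> 0 \<le> x \<Longrightarrow> x \<le> y \<Longrightarrow> ereal y < T \<Longrightarrow>
       ga * Ta x + kk * gs * Ts x \<le> ga * Ta y + kk * gs * Ts y"
      using key by fastforce
  qed
qed

end


context sys begin

lemma part_b:
  assumes q0: "0 < q"
  shows "\<exists>a0 s0. 0 \<le> a0 \<and> 0 \<le> s0 \<and> unique_maximal_solution_blows_up ga gs lam eps sig q ba bs a0 s0"
proof -
  define c1 where "c1 = sig * dd / (8 * GG^4)"
  define C1 where "C1 = lam * (kk - 1) / (kk * gs)"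
  define Y where "Y = 2 * C1 / c1 + 1"
  define N where "N = 2 * Y"
  define X where "X = N / (kk * gs)"
  define c where "c = c1 / 2"
  have c1: "0 < c1" unfolding c1_def using sig dd GG by simp
  have C1: "0 \<le> C1" unfolding C1_def using lam kk gs by simp
  have Y: "1 \<le> Y" unfolding Y_def using C1 c1 by simp
  have N: "0 < N" using Y by (simp add: N_def)
  have X: "0 \<le> X" using N kk gs by (simp add: X_def)
  have c: "0 < c" using c1 by (simp add: c_def)
  have kg: "0 < kk * gs" using kk gs by simp
  have key: "(\<forall>x y. 0 \<le> x \<longrightarrow> x \<le> y \<longrightarrow> ereal y < T \<longrightarrow>
      (ga * Ta x + kk * gs * Ts x) \<le> (ga * Ta y + kk * gs * Ts y)) \<and> T \<le> ereal (1 / (3 * c * N^3))"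
    if s: "sol 0 X T Ta Ts" for T Ta Ts
  proof -
    have u0: "ga * Ta 0 + kk * gs * Ts 0 = N" using sol_init[OF s] gs kk(1) by (simp add: X_def)
    have "(\<forall>x y. 0 \<le> x \<longrightarrow> x \<le> y \<longrightarrow> ereal y < T \<longrightarrow>
      (\<lambda>t. ga * Ta t + kk * gs * Ts t) x \<le> (\<lambda>t. ga * Ta t + kk * gs * Ts t) y) \<and>
      T \<le> ereal (1 / (3 * c * ((\<lambda>t. ga * Ta t + kk * gs * Ts t) 0)^3))"
    proof (rule blow_ineq[where u'="\<lambda>t. fa (Ta t) (Ts t) + kk * fs (Ta t) (Ts t)"])
      show "\<And>t. 0 \<le> t \<Longrightarrow> ereal t < T \<Longrightarrow> ((\<lambda>t. ga * Ta t + kk * gs * Ts t) has_real_derivative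
          fa (Ta t) (Ts t) + kk * fs (Ta t) (Ts t)) (at t within D T)"
        using E_deriv[OF s, where C=0] by simp
      show "0 < c" by fact
      show "0 < ga * Ta 0 + kk * gs * Ts 0" using u0 N by simp
      show "0 < T" using sol_init[OF s] by simp
      fix t assume t: "0 \<le> t" "ereal t < T" and big: "(ga * Ta 0 + kk * gs * Ts 0) / 2 \<le> ga * Ta t + kk * gs * Ts t"
      define a where "a = Ta t"
      define b where "b = Ts t"
      define E where "E = ga * a + kk * gs * b"
      have ab: "0 \<le> a" "0 \<le> b" using sol_pos[OF s order.refl X t] by (auto simp: a_def b_def)
      have EY: "Y \<le> E" using big u0 by (simp add: E_def a_def b_def N_def)
      have E1: "1 \<le> E" using EY Y by simp
      have low: "- C1 * E + sig * dd * (a^4 + b^4) \<le> fa a b + kk * fs a b"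
      proof -
        have "0 \<le> kk * q * bs b" using bs_nn[of b] kk q0 by simp
        moreover have "0 \<le> q * ba a" using q0 ba_nn[of a] by simp
        moreover have "lam * (kk - 1) * b \<le> C1 * E"
        proof -
          have "C1 * E = lam * (kk - 1) * ga * a / (kk * gs) + lam * (kk - 1) * b"
          proof -
            have "gs \<noteq> 0" "kk \<noteq> 0" using gs kk by auto
            then show ?thesis unfolding C1_def E_def by (simp add: field_simps)
          qed
          moreover have "0 \<le> lam * (kk - 1) * ga * a / (kk * gs)" using lam kk ga ab kg by simp
          ultimately show ?thesis by simp
        qed
        ultimately show ?thesis using E_lower[OF ab] by simp
      qed
      have q1: "c1 * E^4 \<le> sig * dd * (a^4 + b^4)"
      proof -
        have "c1 * E^4 \<le> c1 * (8 * GG^4 * (a^4 + b^4))" using E_quart[OF ab] c1 by (simp add: E_def)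
        also have "\<dots> = sig * dd * (a^4 + b^4)" unfolding c1_def using GG by simp
        finally show ?thesis .
      qed
      have cube: "2 * C1 / c1 \<le> E^3"
      proof -
        have "E * 1 \<le> E * E^2" using E1 by (intro mult_left_mono) (auto simp: one_le_power)
        then have "E \<le> E^3" by (simp add: power2_eq_square power3_eq_cube)
        then show ?thesis using EY Y_def by simp
      qed
      have "C1 * E \<le> (c1 / 2) * E^3 * E"
      proof -
        have "C1 \<le> (c1 / 2) * E^3" using cube c1 by (simp add: field_simps)
        then show ?thesis using E1 by (intro mult_right_mono) auto
      qed
      then have "C1 * E \<le> (c1 / 2) * E^4" by (simp add: power_numeral_reduce algebra_simps)
      then have "c * E^4 \<le> - C1 * E + c1 * E^4" by (simp add: c_def)
      also have "\<dots> \<le> fa a b + kk * fs a b" using q1 low by simp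
      finally show "c * ((\<lambda>t. ga * Ta t + kk * gs * Ts t) t)^4 \<le> fa (Ta t) (Ts t) + kk * fs (Ta t) (Ts t)"
        by (simp add: E_def a_def b_def)
    qed
    then show ?thesis using u0 by simp
  qed
  have "unique_maximal_solution_blows_up ga gs lam eps sig q ba bs 0 X"
  proof (rule max_blowup[OF order.refl X ga _ _])
    show "0 < kk * gs" by fact
    show "\<And>T Ta Ts. sol 0 X T Ta Ts \<Longrightarrow> T \<le> ereal (1 / (3 * c * N^3))" using key by blast
    show "\<And>T Ta Ts x y. sol 0 X T Ta Ts \<Longrightarrow> 0 \<le> x \<Longrightarrow> x \<le> y \<Longrightarrow> ereal y < T \<Longrightarrow>
       ga * Ta x + kk * gs * Ts x \<le> ga * Ta y + kk * gs * Ts y"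
      using key by fastforce
  qed
  then show ?thesis using X by blast
qed

end


lemma clamp_lip: "\<bar>max 0 (min 1 a) - max 0 (min 1 b)\<bar> \<le> \<bar>(a::real) - b\<bar>"
  by (simp add: max_def min_def abs_if)

lemma coal_eq:
  assumes "Tm < Tp"
  shows "coalbedo_pl Tm Tp bm bp x = bm + (bp - bm) * max 0 (min 1 ((x - Tm) / (Tp - Tm)))"
proof -
  have p: "0 < Tp - Tm" using assms by simp
  consider "x \<le> Tm" | "Tm < x" "x \<le> Tp" | "Tp < x" by linarith
  then show ?thesis
  proof cases
    case 1
    then have "(x - Tm) / (Tp - Tm) \<le> 0" using p by (simp add: divide_nonpos_pos)
    then show ?thesis using 1 by (simp add: coalbedo_pl_def)
  next
    case 2
    then have "0 \<le> (x - Tm) / (Tp - Tm)" "(x - Tm) / (Tp - Tm) \<le> 1" using p by (auto simp: field_simps)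
    then show ?thesis using 2 by (simp add: coalbedo_pl_def)
  next
    case 3
    then have "1 < (x - Tm) / (Tp - Tm)" using p by (simp add: field_simps)
    then show ?thesis using 3 assms by (simp add: coalbedo_pl_def)
  qed
qed

lemma coal_props:
  assumes "Tm < Tp" "bm < bp"
  shows "((bp - bm) / (Tp - Tm))-lipschitz_on UNIV (coalbedo_pl Tm Tp bm bp)"
    and "bm \<le> coalbedo_pl Tm Tp bm bp x"
proof -
  have p: "0 < Tp - Tm" "0 < bp - bm" using assms by auto
  show "bm \<le> coalbedo_pl Tm Tp bm bp x" unfolding coal_eq[OF assms(1)] using p by simp
  show "((bp - bm) / (Tp - Tm))-lipschitz_on UNIV (coalbedo_pl Tm Tp bm bp)"
  proof (rule lipschitz_onI)
    show "0 \<le> (bp - bm) / (Tp - Tm)" using p by simp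
    fix x y :: real
    have "dist (coalbedo_pl Tm Tp bm bp x) (coalbedo_pl Tm Tp bm bp y)
      = (bp - bm) * \<bar>max 0 (min 1 ((x - Tm) / (Tp - Tm))) - max 0 (min 1 ((y - Tm) / (Tp - Tm)))\<bar>"
      unfolding coal_eq[OF assms(1)] dist_real_def using p
      by (simp add: right_diff_distrib[symmetric] abs_mult)
    also have "\<dots> \<le> (bp - bm) * \<bar>(x - Tm) / (Tp - Tm) - (y - Tm) / (Tp - Tm)\<bar>"
      using p by (intro mult_left_mono clamp_lip) auto
    also have "\<dots> = (bp - bm) / (Tp - Tm) * dist x y"
      using p by (simp add: dist_real_def diff_divide_distrib[symmetric] abs_divide)
    finally show "dist (coalbedo_pl Tm Tp bm bp x) (coalbedo_pl Tm Tp bm bp y) \<le> (bp - bm) / (Tp - Tm) * dist x y" .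
  qed
qed

theorem proposition2p7:
  fixes ga gs :: real
  assumes "ga > 0" and "gs > 0"
  shows
   "(\<forall>q sig eps Tm Tp bm bp Ta0 Ts0.
       q > 0 \<longrightarrow> sig > 0 \<longrightarrow> 0 < Tm \<longrightarrow> Tm < Tp \<longrightarrow> 0 < bm \<longrightarrow> bm < bp \<longrightarrow>
       eps > 2 \<longrightarrow> Ta0 \<ge> 0 \<longrightarrow> Ts0 \<ge> 0 \<longrightarrow>
       unique_maximal_solution_blows_up ga gs 0 eps sig q (\<lambda>_. 0) (coalbedo_pl Tm Tp bm bp) Ta0 Ts0)
    \<and>
    (\<forall>lam q sig eps ba bs La Ls.
       lam > 0 \<longrightarrow> q > 0 \<longrightarrow> sig > 0 \<longrightarrow> eps > 2 \<longrightarrow>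
       (\<forall>x. ba x \<ge> 0) \<longrightarrow> (\<forall>x. bs x > 0) \<longrightarrow>
       La-lipschitz_on UNIV ba \<longrightarrow> Ls-lipschitz_on UNIV bs \<longrightarrow>
       (\<exists>Ta0 Ts0. Ta0 \<ge> 0 \<and> Ts0 \<ge> 0 \<and>
          unique_maximal_solution_blows_up ga gs lam eps sig q ba bs Ta0 Ts0))"
proof (intro conjI allI impI)
  fix q sig eps Tm Tp bm bp Ta0 Ts0 :: real
  assume q: "q > 0" and sig: "sig > 0" and Tm: "0 < Tm" and TT: "Tm < Tp" and bm: "0 < bm" and bb: "bm < bp"
    and eps: "eps > 2" and a0: "Ta0 \<ge> 0" and s0: "Ts0 \<ge> 0"
  have S: "sys ga gs 0 eps sig q (\<lambda>_. 0) (coalbedo_pl Tm Tp bm bp) 0 ((bp - bm) / (Tp - Tm))"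
  proof (unfold_locales)
    show "0 < ga" "0 < gs" by fact+
    show "(0::real) \<le> 0" by simp
    show "0 \<le> q" "0 < sig" "2 < eps" using q sig eps by auto
    show "\<And>x. (0::real) \<le> 0" by simp
    show "\<And>x. 0 \<le> coalbedo_pl Tm Tp bm bp x" using coal_props(2)[OF TT bb] bm by (meson less_imp_le order_trans)
    show "0-lipschitz_on UNIV (\<lambda>_. 0::real)" by (simp add: lipschitz_on_def)
    show "((bp - bm) / (Tp - Tm))-lipschitz_on UNIV (coalbedo_pl Tm Tp bm bp)" by (rule coal_props(1)[OF TT bb])
  qed
  show "unique_maximal_solution_blows_up ga gs 0 eps sig q (\<lambda>_. 0) (coalbedo_pl Tm Tp bm bp) Ta0 Ts0"
    by (rule sys.part_a[OF S refl bm coal_props(2)[OF TT bb] q a0 s0])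
next
  fix lam q sig eps La Ls :: real and ba bs :: "real \<Rightarrow> real"
  assume lam: "lam > 0" and q: "q > 0" and sig: "sig > 0" and eps: "eps > 2"
    and ba: "\<forall>x. ba x \<ge> 0" and bs: "\<forall>x. bs x > 0"
    and La: "La-lipschitz_on UNIV ba" and Ls: "Ls-lipschitz_on UNIV bs"
  have S: "sys ga gs lam eps sig q ba bs La Ls"
    using assms lam q sig eps ba bs La Ls by unfold_locales (auto simp: less_imp_le)
  show "\<exists>Ta0 Ts0. Ta0 \<ge> 0 \<and> Ts0 \<ge> 0 \<and> unique_maximal_solution_blows_up ga gs lam eps sig q ba bs Ta0 Ts0"
    by (rule sys.part_b[OF S q])
qed


end
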